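(* Let $K$, $\mu_0$ and $\beta_c$ be as in the context and let $w:=\sup[\mathrm{supp}(\mu_0)]\in(0,\infty]$. If $\alpha\in(0,\infty)$, then $\beta_c<\infty$ for all such $\mu_0$ with $\mu_0(\{w\})=0$ (in particular whenever $w=\infty$).
   Context: Let $K$ be a probability distribution on $\mathbb N=\{1,2,\dots\}$ such that $\lim_{n\to\infty}\log K(n)/\log n=-(1+\alpha)$ for some $\alpha\in[0,\infty)$. Let $\mu_0$ be a probability measure on $\mathbb R$ with mean $0$, variance $1$, and $M(\lambda):=\int e^{\lambda x}\,d\mu_0(x)<\infty$ for all $\lambda\in\mathbb R$. Let $\omega=(\omega_k)_{k\ge 0}$ be i.i.d. with law $\mu_0$ (law $\mathbb P$, expectation $\mathbb E$). For $\beta\ge 0$, $h\in\mathbb R$ put $Z_n^{\beta,h,\omega}=\sum_{N\ge1}\sum_{0=k_0<k_1<\dots<k_N=n}\prod_{i=1}^N K(k_i-k_{i-1})\,e^{\beta\omega_{k_{i-1}}-h}$. The quenched free energy $f^{\mathrm{que}}(\beta,h)=\lim_{n}\frac1n\log Z_n^{\beta,h,\omega}$ exists $\mathbb P$-a.s., is non-random and $\ge0$; $h_c^{\mathrm{que}}(\beta):=\inf\{h: f^{\mathrm{que}}(\beta,h)=0\}$; $h_c^{\mathrm{ann}}(\beta):=\inf\{h:\lim_n\frac1n\log\mathbb E Z_n^{\beta,h,\omega}=0\}=\log M(\beta)$. $\beta_c:=\sup\{\beta\ge0:h_c^{\mathrm{que}}(\beta)=h_c^{\mathrm{ann}}(\beta)\}\in[0,\infty]$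 (equality holds exactly on $[0,\beta_c]$). *)

theory Defs
  imports "HOL-Probability.Probability"
begin

definition renewal_paths :: "nat \<Rightarrow> nat list set" where
  "renewal_paths n = {ks. length ks \<ge> 2 \<and> sorted_wrt (<) ks \<and> ks ! 0 = 0 \<and> last ks = n}"

definition Zpin :: "(nat \<Rightarrow> real) \<Rightarrow> real \<Rightarrow> real \<Rightarrow> (nat \<Rightarrow> real) \<Rightarrow> nat \<Rightarrow> real" where
  "Zpin K \<beta> h \<omega> n =
     (\<Sum>ks\<in>renewal_paths n. \<Prod>i\<in>{1..<length ks}.
         K (ks ! i - ks ! (i - 1)) * exp (\<beta> * \<omega> (ks ! (i - 1)) - h))"

definition env :: "real measure \<Rightarrow> (nat \<Rightarrow> real) measure" where
  "env \<mu>0 = PiM UNIV (\<lambda>_. \<mu>0)"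

text \<open>Quenched free energy: the (a.s. existing, non-random) limit of (1/n) log Z_n.\<close>
definition f_que :: "(nat \<Rightarrow> real) \<Rightarrow> real measure \<Rightarrow> real \<Rightarrow> real \<Rightarrow> real" where
  "f_que K \<mu>0 \<beta> h =
     (THE F. AE \<omega> in env \<mu>0. (\<lambda>n. ln (Zpin K \<beta> h \<omega> n) / real n) \<longlonglongrightarrow> F)"

definition hc_que :: "(nat \<Rightarrow> real) \<Rightarrow> real measure \<Rightarrow> real \<Rightarrow> real" where
  "hc_que K \<mu>0 \<beta> = Inf {h. f_que K \<mu>0 \<beta> h = 0}"

definition f_ann :: "(nat \<Rightarrow> real) \<Rightarrow> real measure \<Rightarrow> real \<Rightarrow> real \<Rightarrow> real" where
  "f_ann K \<mu>0 \<beta> h =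
     lim (\<lambda>n. ln (\<integral>\<omega>. Zpin K \<beta> h \<omega> n \<partial>env \<mu>0) / real n)"

definition hc_ann :: "(nat \<Rightarrow> real) \<Rightarrow> real measure \<Rightarrow> real \<Rightarrow> real" where
  "hc_ann K \<mu>0 \<beta> = Inf {h. f_ann K \<mu>0 \<beta> h = 0}"

text \<open>The set {beta >= 0 : h_c^que(beta) = h_c^ann(beta)}; beta_c is its supremum,
  so beta_c < infinity iff this set is bounded above.\<close>
definition disorder_irrelevant_set :: "(nat \<Rightarrow> real) \<Rightarrow> real measure \<Rightarrow> real set" where
  "disorder_irrelevant_set K \<mu>0 = {\<beta>. \<beta> \<ge> 0 \<and> hc_que K \<mu>0 \<beta> = hc_ann K \<mu>0 \<beta>}"

definition msupport :: "real measure \<Rightarrow> real set" where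
  "msupport \<mu> = {x. \<forall>e>0. emeasure \<mu> (ball x e) > 0}"

end

theory Submission
  imports Defs
begin


fun Zr :: "(nat \<Rightarrow> real) \<Rightarrow> real \<Rightarrow> real \<Rightarrow> (nat \<Rightarrow> real) \<Rightarrow> nat \<Rightarrow> real" where
  "Zr K \<beta> h \<omega> 0 = 1"
| "Zr K \<beta> h \<omega> (Suc n) = (\<Sum>m<Suc n. Zr K \<beta> h \<omega> m * K (Suc n - m) * exp (\<beta> * \<omega> m - h))"

definition RP :: "nat \<Rightarrow> nat list set" where
  "RP m = {ks. ks \<noteq> [] \<and> sorted_wrt (<) ks \<and> ks ! 0 = 0 \<and> last ks = m}"

definition wt :: "(nat \<Rightarrow> real) \<Rightarrow> real \<Rightarrow> real \<Rightarrow> (nat \<Rightarrow> real) \<Rightarrow> nat list \<Rightarrow> real" where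
  "wt K \<beta> h \<omega> ks = (\<Prod>i\<in>{1..<length ks}. K (ks ! i - ks ! (i - 1)) * exp (\<beta> * \<omega> (ks ! (i - 1)) - h))"

lemma sorted_le_last: "sorted_wrt (<) (p::nat list) \<Longrightarrow> p \<noteq> [] \<Longrightarrow> x \<in> set p \<Longrightarrow> x \<le> last p"
proof (induction p rule: rev_induct)
  case (snoc a p) then show ?case by (cases "p = []") (auto simp: sorted_wrt_append)
qed simp

lemma finite_RP: "finite (RP m)"
proof -
  have "RP m \<subseteq> {xs. set xs \<subseteq> {..m} \<and> length xs \<le> Suc m}"
  proof
    fix ks assume ks: "ks \<in> RP m"
    then have s: "set ks \<subseteq> {..m}" using sorted_le_last by (auto simp: RP_def)
    have "distinct ks" using ks by (auto simp: RP_def strict_sorted_iff)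
    then have "card (set ks) = length ks" by (simp add: distinct_card)
    moreover have "card (set ks) \<le> card {..m}" using s by (intro card_mono) auto
    ultimately show "ks \<in> {xs. set xs \<subseteq> {..m} \<and> length xs \<le> Suc m}" using s by auto
  qed
  moreover have "finite {xs. set xs \<subseteq> {..m} \<and> length xs \<le> Suc m}"
    by (rule finite_lists_length_le) auto
  ultimately show ?thesis by (rule finite_subset)
qed

lemma RP_0: "RP 0 = {[0]}"
proof -
  { fix ks assume "ks \<in> RP 0"
    then have ne: "ks \<noteq> []" and s: "sorted_wrt (<) ks" and h: "ks ! 0 = 0" and l: "last ks = 0"
      by (auto simp: RP_def)
    have "length ks = 1"
    proof (rule ccontr)
      assume "length ks \<noteq> 1"
      then have "length ks \<ge> 2" using ne by (cases ks) (auto simp: Suc_le_eq)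
      then have "ks ! 0 < ks ! (length ks - 1)" using s sorted_wrt_nth_less[of "(<)" ks 0 "length ks - 1"] by auto
      then show False using h l ne by (simp add: last_conv_nth)
    qed
    then have "ks = [0]" using h by (cases ks) auto }
  then show ?thesis by (auto simp: RP_def)
qed

lemma RP_Suc: "RP (Suc n) = (\<lambda>p. p @ [Suc n]) ` (\<Union>m<Suc n. RP m)"
proof (intro equalityI subsetI)
  fix ks assume ks: "ks \<in> RP (Suc n)"
  then have ne: "ks \<noteq> []" and s: "sorted_wrt (<) ks" and h: "ks ! 0 = 0" and l: "last ks = Suc n"
    by (auto simp: RP_def)
  have bne: "butlast ks \<noteq> []"
  proof
    assume "butlast ks = []"
    then have "ks = [last ks]" using ne by (metis append_butlast_last_id append_Nil)
    then show False using h l by (metis nat.distinct(1) nth_Cons_0)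
  qed
  have eq: "ks = butlast ks @ [Suc n]" using ne l by (metis append_butlast_last_id)
  have sb: "sorted_wrt (<) (butlast ks)" using s eq by (metis sorted_wrt_append)
  have "last (butlast ks) < Suc n" using s eq bne
    by (metis last_in_set list.set_intros(1) sorted_wrt_append)
  moreover have "butlast ks ! 0 = 0" using h bne by (metis length_greater_0_conv nth_butlast)
  ultimately have "butlast ks \<in> (\<Union>m<Suc n. RP m)" using sb bne by (auto simp: RP_def)
  then show "ks \<in> (\<lambda>p. p @ [Suc n]) ` (\<Union>m<Suc n. RP m)" using eq by blast
next
  fix ks assume "ks \<in> (\<lambda>p. p @ [Suc n]) ` (\<Union>m<Suc n. RP m)"
  then obtain p m where m: "m < Suc n" and p: "p \<in> RP m" and ks: "ks = p @ [Suc n]" by auto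
  have "\<forall>x\<in>set p. x < Suc n" using p m sorted_le_last[of p] by (auto simp: RP_def) (meson le_less_trans)
  then show "ks \<in> RP (Suc n)" using p ks by (auto simp: RP_def sorted_wrt_append nth_append)
qed

lemma wt_snoc: assumes "p \<noteq> []"
  shows "wt K \<beta> h \<omega> (p @ [x]) = wt K \<beta> h \<omega> p * (K (x - last p) * exp (\<beta> * \<omega> (last p) - h))"
proof -
  have "{1..<length (p @ [x])} = insert (length p) {1..<length p}" using assms by (cases p) auto
  then have "wt K \<beta> h \<omega> (p @ [x]) = K (x - (p@[x]) ! (length p - 1)) * exp (\<beta> * \<omega> ((p@[x]) ! (length p - 1)) - h)
     * (\<Prod>i\<in>{1..<length p}. K ((p@[x]) ! i - (p@[x]) ! (i - 1)) * exp (\<beta> * \<omega> ((p@[x]) ! (i - 1)) - h))"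
    unfolding wt_def by (simp add: prod.insert)
  also have "(\<Prod>i\<in>{1..<length p}. K ((p@[x]) ! i - (p@[x]) ! (i - 1)) * exp (\<beta> * \<omega> ((p@[x]) ! (i - 1)) - h))
     = wt K \<beta> h \<omega> p" unfolding wt_def by (intro prod.cong) (auto simp: nth_append)
  also have "(p@[x]) ! (length p - 1) = last p" using assms by (simp add: nth_append last_conv_nth)
  finally show ?thesis by simp
qed

lemma Zr_RP: "Zr K \<beta> h \<omega> n = (\<Sum>ks\<in>RP n. wt K \<beta> h \<omega> ks)"
proof (induction n rule: less_induct)
  case (less n)
  show ?case
  proof (cases n)
    case 0 then show ?thesis by (simp add: RP_0 wt_def)
  next
    case (Suc k)
    have inj: "inj_on (\<lambda>p. p @ [Suc k]) (\<Union>m<Suc k. RP m)" by (auto intro: inj_onI)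
    have "(\<Sum>ks\<in>RP n. wt K \<beta> h \<omega> ks) = (\<Sum>p\<in>(\<Union>m<Suc k. RP m). wt K \<beta> h \<omega> (p @ [Suc k]))"
      unfolding Suc RP_Suc by (subst sum.reindex[OF inj]) simp
    also have "\<dots> = (\<Sum>m<Suc k. \<Sum>p\<in>RP m. wt K \<beta> h \<omega> (p @ [Suc k]))"
      apply (rule sum.UNION_disjoint)
        apply (simp add: finite_RP) apply (simp add: finite_RP) by (auto simp: RP_def)
    also have "\<dots> = (\<Sum>m<Suc k. \<Sum>p\<in>RP m. wt K \<beta> h \<omega> p * (K (Suc k - m) * exp (\<beta> * \<omega> m - h)))"
      by (intro sum.cong refl, subst wt_snoc) (auto simp: RP_def)
    also have "\<dots> = (\<Sum>m<Suc k. Zr K \<beta> h \<omega> m * K (Suc k - m) * exp (\<beta> * \<omega> m - h))"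
      using less Suc by (auto simp: sum_distrib_right mult.assoc intro!: sum.cong)
    finally show ?thesis using Suc by simp
  qed
qed

lemma Zpin_Zr: "n \<ge> 1 \<Longrightarrow> Zpin K \<beta> h \<omega> n = Zr K \<beta> h \<omega> n"
proof -
  assume n: "n \<ge> 1"
  have "renewal_paths n = RP n"
  proof (intro equalityI subsetI)
    fix ks assume "ks \<in> renewal_paths n" then show "ks \<in> RP n" by (auto simp: renewal_paths_def RP_def)
  next
    fix ks assume ks: "ks \<in> RP n"
    have "length ks \<noteq> 1"
    proof
      assume "length ks = 1" then have "ks = [ks ! 0]" by (cases ks) auto
      then show False using ks n by (auto simp: RP_def)
    qed
    then show "ks \<in> renewal_paths n" using ks by (cases ks) (auto simp: renewal_paths_def RP_def Suc_le_eq)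
  qed
  then show ?thesis by (simp add: Zpin_def Zr_RP wt_def)
qed



lemma fekete_aux:
  fixes a :: "nat \<Rightarrow> real"
  assumes sup: "\<And>n m. n \<ge> N \<Longrightarrow> m \<ge> N \<Longrightarrow> a (n + m) \<ge> a n + a m"
    and m: "m \<ge> N" and r: "r \<ge> N"
  shows "a (q * m + r) \<ge> real q * a m + a r"
proof (induction q)
  case (Suc q)
  have "a (Suc q * m + r) = a ((q * m + r) + m)" by (simp add: algebra_simps)
  also have "\<dots> \<ge> a (q * m + r) + a m" using sup[of "q * m + r" m] m r by simp
  finally show ?case using Suc by (simp add: algebra_simps)
qed simp

lemma fekete:
  fixes a :: "nat \<Rightarrow> real"
  assumes sup: "\<And>n m. n \<ge> N \<Longrightarrow> m \<ge> N \<Longrightarrow> a (n + m) \<ge> a n + a m"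
    and N: "N \<ge> 1" and bnd: "\<And>n. n \<ge> N \<Longrightarrow> a n \<le> C * real n"
  shows "(\<lambda>n. a n / real n) \<longlonglongrightarrow> Sup ((\<lambda>n. a n / real n) ` {N..})"
proof -
  define L where "L = Sup ((\<lambda>n. a n / real n) ` {N..})"
  have bdd: "bdd_above ((\<lambda>n. a n / real n) ` {N..})"
  proof (rule bdd_aboveI2)
    fix n assume "n \<in> {N..}" then show "a n / real n \<le> C" using bnd[of n] N
      by (simp add: pos_divide_le_eq)
  qed
  have up: "a n / real n \<le> L" if "n \<ge> N" for n
    unfolding L_def using bdd that by (intro cSup_upper) auto
  show ?thesis unfolding L_def[symmetric]
  proof (rule LIMSEQ_I)
    fix e :: real assume e: "e > 0"
    have "L - e/2 < L" using e by simp
    then obtain m where m: "m \<ge> N" and am: "a m / real m > L - e/2"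
      unfolding L_def using less_cSupD[of "(\<lambda>n. a n / real n) ` {N..}" "L - e/2"] by (auto simp: L_def)
    have m1: "m \<ge> 1" using m N by simp
    define b where "b = a m / real m"
    define c where "c = Min (a ` {N..<N+m})"
    define D where "D = real (N + m) * \<bar>b\<bar> + \<bar>c\<bar>"
    have D0: "D \<ge> 0" unfolding D_def by simp
    obtain n0 :: nat where n0: "real n0 > 2 * D / e" using reals_Archimedean2 by blast
    show "\<exists>no. \<forall>n\<ge>no. norm (a n / real n - L) < e"
    proof (intro exI allI impI)
      fix n assume n: "n \<ge> max (N + m) (Suc n0)"
      define q where "q = (n - N) div m"
      define r where "r = N + (n - N) mod m"
      have nqr: "n = q * m + r" unfolding q_def r_def using n by simp
      have rr: "N \<le> r" "r < N + m" unfolding r_def using m1 by auto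
      have "a n \<ge> real q * a m + a r" unfolding nqr by (rule fekete_aux[OF sup m rr(1)])
      moreover have "a r \<ge> c" unfolding c_def using rr by (intro Min_le) auto
      ultimately have "a n \<ge> real q * a m + c" by simp
      moreover have "real q * a m = (real n - real r) * b" unfolding b_def using m1 nqr
        by (simp add: field_simps)
      moreover have "real r * b - c \<le> D" unfolding D_def
      proof -
        have "real r * b \<le> real r * \<bar>b\<bar>" by (simp add: mult_left_mono)
        also have "\<dots> \<le> real (N + m) * \<bar>b\<bar>" using rr by (intro mult_right_mono) auto
        finally have "real r * b \<le> real (N + m) * \<bar>b\<bar>" .
        then show "real r * b - c \<le> real (N + m) * \<bar>b\<bar> + \<bar>c\<bar>" by simp
      qed
      ultimately have an: "a n \<ge> real n * b - D" by (simp add: algebra_simps)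
      have npos: "real n > 0" using n by simp
      have "(real n * b - D) / real n \<le> a n / real n" using an npos by (intro divide_right_mono) auto
      moreover have "(real n * b - D) / real n = b - D / real n" using npos by (simp add: field_simps)
      ultimately have "a n / real n \<ge> b - D / real n" by simp
      moreover have "D / real n < e / 2"
      proof -
        have "real n > 2 * D / e" using n n0 by simp
        then have "2 * D < e * real n" using e by (simp add: field_simps)
        then show ?thesis using npos by (simp add: field_simps)
      qed
      ultimately have "a n / real n > L - e" using am unfolding b_def by simp
      moreover have "a n / real n \<le> L" using up n by simp
      ultimately show "norm (a n / real n - L) < e" using e by simp
    qed
  qed
qed

declare sum.lessThan_Suc [simp del]

fun Uh :: "(nat \<Rightarrow> real) \<Rightarrow> real \<Rightarrow> nat \<Rightarrow> real" where
  "Uh K x 0 = 1"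
| "Uh K x (Suc n) = (\<Sum>m<Suc n. Uh K x m * K (Suc n - m) * x)"

lemma Ksum_le1:
  assumes K0: "\<And>n. K n \<ge> (0::real)" and KS: "K sums 1"
  shows "(\<Sum>m<N. K (N - m)) \<le> 1"
proof -
  have "(\<Sum>m<N. K (N - m)) = (\<Sum>i<N. K (Suc i))"
    using sum.nat_diff_reindex[of "\<lambda>i. K (Suc i)" N] by (simp add: Suc_diff_Suc)
  also have "\<dots> \<le> (\<Sum>i<Suc N. K i)" unfolding sum.lessThan_Suc_shift using K0[of 0] by simp
  also have "\<dots> \<le> suminf K" using KS K0 by (intro sum_le_suminf) (auto simp: sums_summable)
  also have "\<dots> = 1" using KS by (simp add: sums_unique[symmetric])
  finally show ?thesis .
qed

lemma Uh_nonneg: "(\<And>n. K n \<ge> 0) \<Longrightarrow> x \<ge> 0 \<Longrightarrow> Uh K x n \<ge> 0"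
proof (induction n rule: less_induct)
  case (less n) then show ?case by (cases n) (auto intro!: sum_nonneg mult_nonneg_nonneg)
qed

lemma Uh_le1:
  assumes K0: "\<And>n. K n \<ge> (0::real)" and KS: "K sums 1" and x: "0 \<le> x" "x \<le> 1"
  shows "Uh K x n \<le> 1"
proof (induction n rule: less_induct)
  case (less n)
  show ?case
  proof (cases n)
    case (Suc k)
    have "Uh K x n \<le> (\<Sum>m<Suc k. 1 * K (Suc k - m) * 1)" unfolding Suc Uh.simps
      using less Suc K0 x Uh_nonneg[OF K0 x(1)]
      by (intro sum_mono mult_mono) auto
    also have "\<dots> \<le> 1" using Ksum_le1[OF K0 KS] by simp
    finally show ?thesis .
  qed simp
qed

lemma Uh_ge: "(\<And>n. K n \<ge> 0) \<Longrightarrow> x \<ge> 0 \<Longrightarrow> n \<ge> 1 \<Longrightarrow> Uh K x n \<ge> x * K n"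
proof -
  assume K0: "\<And>n. K n \<ge> 0" and x: "x \<ge> 0" and n: "n \<ge> 1"
  then obtain k where k: "n = Suc k" by (cases n) auto
  have "Uh K x n = Uh K x 0 * K (Suc k - 0) * x + (\<Sum>m\<in>{..<Suc k}-{0}. Uh K x m * K (Suc k - m) * x)"
    unfolding k Uh.simps by (subst sum.remove[of _ 0]) auto
  also have "\<dots> \<ge> Uh K x 0 * K (Suc k - 0) * x"
    using Uh_nonneg[OF K0 x] K0 x by (auto intro!: sum_nonneg)
  finally show ?thesis using k by (simp add: mult.commute)
qed

lemma Uh_le_pow:
  assumes K0: "\<And>n. K n \<ge> (0::real)" and KS: "K sums 1" and x: "1 \<le> x"
  shows "Uh K x n \<le> x ^ n"
proof (induction n rule: less_induct)
  case (less n)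
  show ?case
  proof (cases n)
    case (Suc k)
    have "Uh K x n \<le> (\<Sum>m<Suc k. x ^ k * K (Suc k - m) * x)" unfolding Suc Uh.simps
    proof (intro sum_mono, rule mult_right_mono)
      fix m assume m: "m \<in> {..<Suc k}"
      have "Uh K x m \<le> x ^ m" using less Suc m by auto
      also have "\<dots> \<le> x ^ k" using m x by (intro power_increasing) auto
      finally show "Uh K x m * K (Suc k - m) \<le> x ^ k * K (Suc k - m)" using K0 by (intro mult_right_mono) auto
    qed (use x in auto)
    also have "\<dots> = x ^ Suc k * (\<Sum>m<Suc k. K (Suc k - m))" by (simp add: sum_distrib_left algebra_simps)
    also have "\<dots> \<le> x ^ Suc k * 1" using Ksum_le1[OF K0 KS] x by (intro mult_left_mono) auto
    finally show ?thesis using Suc by simp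
  qed simp
qed

lemma Uh_super:
  assumes K0: "\<And>n. K n \<ge> (0::real)" and x: "0 \<le> x"
  shows "Uh K x (n + m) \<ge> Uh K x n * Uh K x m"
proof (induction m rule: less_induct)
  case (less m)
  show ?case
  proof (cases m)
    case (Suc k)
    have nn: "\<And>j. Uh K x j \<ge> 0" using Uh_nonneg[OF K0 x] .
    have "Uh K x n * Uh K x m = (\<Sum>i<Suc k. Uh K x n * Uh K x i * K (Suc k - i) * x)"
      unfolding Suc Uh.simps by (simp add: sum_distrib_left mult.assoc)
    also have "\<dots> \<le> (\<Sum>i<Suc k. Uh K x (n + i) * K (Suc (n + k) - (n + i)) * x)"
      using less Suc K0 x by (intro sum_mono mult_right_mono) (auto simp: mult_right_mono)
    also have "\<dots> = (\<Sum>j\<in>(\<lambda>i. n + i) ` {..<Suc k}. Uh K x j * K (Suc (n + k) - j) * x)"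
      by (subst sum.reindex) (auto intro: inj_onI)
    also have "\<dots> \<le> (\<Sum>j<Suc (n + k). Uh K x j * K (Suc (n + k) - j) * x)"
      using nn K0 x by (intro sum_mono2) auto
    also have "\<dots> = Uh K x (n + m)" using Suc by simp
    finally show ?thesis .
  qed simp
qed

lemma lnK_over_n:
  fixes K :: "nat \<Rightarrow> real"
  assumes K_tail: "(\<lambda>n. ln (K n) / ln (real n)) \<longlonglongrightarrow> - (1 + \<alpha>)" and a: "\<alpha> > 0"
  shows "(\<lambda>n. ln (K n) / real n) \<longlonglongrightarrow> 0"
    and "eventually (\<lambda>n. K n \<noteq> 0) sequentially"
proof -
  have "(\<lambda>n. (ln (K n) / ln (real n)) * (ln (real n) / real n)) \<longlonglongrightarrow> (- (1 + \<alpha>)) * 0"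
    by (intro tendsto_mult K_tail lim_ln_over_n)
  moreover have "eventually (\<lambda>n. (ln (K n) / ln (real n)) * (ln (real n) / real n) = ln (K n) / real n) sequentially"
    using eventually_ge_at_top[of "2::nat"]
  proof eventually_elim
    case (elim n) then have "ln (real n) > 0" by simp
    then show ?case by simp
  qed
  ultimately show "(\<lambda>n. ln (K n) / real n) \<longlonglongrightarrow> 0" using Lim_transform_eventually by force
  have "eventually (\<lambda>n. ln (K n) / ln (real n) < 0) sequentially"
    using order_tendstoD(2)[OF K_tail, of 0] a by simp
  then show "eventually (\<lambda>n. K n \<noteq> 0) sequentially"
    by eventually_elim auto
qed

lemma ann_zero:
  fixes K :: "nat \<Rightarrow> real"
  assumes K0: "\<And>n. K n \<ge> 0" and KS: "K sums 1"
    and K_tail: "(\<lambda>n. ln (K n) / ln (real n)) \<longlonglongrightarrow> - (1 + \<alpha>)" and a: "\<alpha> > 0"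
    and x: "0 < x" "x \<le> 1"
  shows "(\<lambda>n. ln (Uh K x n) / real n) \<longlonglongrightarrow> 0"
proof (rule tendsto_sandwich)
  show "(\<lambda>n. ln x / real n + ln (K n) / real n) \<longlonglongrightarrow> 0"
    using tendsto_add[OF tendsto_divide_0[OF tendsto_const filterlim_at_top_imp_at_infinity[OF filterlim_real_sequentially]] lnK_over_n(1)[OF K_tail a]]
    by simp
  show "(\<lambda>n. 0) \<longlonglongrightarrow> (0::real)" by simp
  show "eventually (\<lambda>n. ln x / real n + ln (K n) / real n \<le> ln (Uh K x n) / real n) sequentially"
    using lnK_over_n(2)[OF K_tail a] eventually_ge_at_top[of "1::nat"]
  proof eventually_elim
    case (elim n)
    have Kp: "K n > 0" using elim K0[of n] by simp
    have "x * K n \<le> Uh K x n" using Uh_ge[OF K0, of x n] x elim by simp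
    moreover have "x * K n > 0" using Kp x by simp
    ultimately have "ln (x * K n) \<le> ln (Uh K x n)" by simp
    then have "ln x + ln (K n) \<le> ln (Uh K x n)" using Kp x by (simp add: ln_mult)
    then show ?case using elim by (simp add: add_divide_distrib[symmetric] divide_right_mono)
  qed
  show "eventually (\<lambda>n. ln (Uh K x n) / real n \<le> 0) sequentially"
  proof (intro always_eventually allI)
    fix n
    have "Uh K x n \<le> 1" using Uh_le1[OF K0 KS] x by simp
    then have "ln (Uh K x n) \<le> 0" using Uh_nonneg[where K=K and x=x and n=n] K0 x by (cases "Uh K x n > 0") auto
    then show "ln (Uh K x n) / real n \<le> 0" by (simp add: divide_nonpos_nonneg)
  qed
qed

lemma Uh_pow:
  assumes K0: "\<And>n. K n \<ge> (0::real)" and x: "0 \<le> x"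
  shows "Uh K x (k * n) \<ge> Uh K x n ^ k"
proof (induction k)
  case (Suc k)
  have "Uh K x n ^ Suc k = Uh K x n * Uh K x n ^ k" by simp
  also have "\<dots> \<le> Uh K x n * Uh K x (k * n)"
    using Suc Uh_nonneg[OF K0 x] by (intro mult_left_mono) auto
  also have "\<dots> \<le> Uh K x (n + k * n)" by (rule Uh_super[OF K0 x])
  finally show ?case by simp
qed simp

lemma ann_pos:
  fixes K :: "nat \<Rightarrow> real"
  assumes K0: "\<And>n. K n \<ge> 0" and KS: "K sums 1"
    and K_tail: "(\<lambda>n. ln (K n) / ln (real n)) \<longlonglongrightarrow> - (1 + \<alpha>)" and a: "\<alpha> > 0"
    and x: "1 \<le> x" and n1: "n1 \<ge> 1" "x * K n1 > 1"
  shows "\<exists>L>0. (\<lambda>n. ln (Uh K x n) / real n) \<longlonglongrightarrow> L"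
proof -
  obtain N0 where N0: "\<And>n. n \<ge> N0 \<Longrightarrow> K n \<noteq> 0"
    using lnK_over_n(2)[OF K_tail a] unfolding eventually_sequentially by auto
  define N where "N = Suc N0"
  have N1: "N \<ge> 1" unfolding N_def by simp
  have pos: "Uh K x n > 0" if "n \<ge> N" for n
  proof -
    have "K n > 0" using N0[of n] K0[of n] that unfolding N_def by simp
    then have "x * K n > 0" using x by simp
    also have "\<dots> \<le> Uh K x n" using Uh_ge[OF K0, of x n] x that N1 by simp
    finally show ?thesis .
  qed
  define a where "a n = ln (Uh K x n)" for n
  have sup: "a (n + m) \<ge> a n + a m" if "n \<ge> N" "m \<ge> N" for n m
  proof -
    have "Uh K x n * Uh K x m \<le> Uh K x (n + m)" using Uh_super[OF K0] x by simp
    moreover have "Uh K x n * Uh K x m > 0" using pos that by simp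
    ultimately have "ln (Uh K x n * Uh K x m) \<le> ln (Uh K x (n + m))" by simp
    then show ?thesis unfolding a_def using pos[OF that(1)] pos[OF that(2)] by (simp add: ln_mult)
  qed
  have bnd: "a n \<le> ln x * real n" if "n \<ge> N" for n
  proof -
    have "Uh K x n \<le> x ^ n" by (rule Uh_le_pow[OF K0 KS x])
    then have "ln (Uh K x n) \<le> ln (x ^ n)" using pos[OF that] by simp
    then show ?thesis unfolding a_def using x by (simp add: ln_realpow mult.commute)
  qed
  have lim: "(\<lambda>n. a n / real n) \<longlonglongrightarrow> Sup ((\<lambda>n. a n / real n) ` {N..})"
    by (rule fekete[OF sup N1 bnd]) auto
  have bdd: "bdd_above ((\<lambda>n. a n / real n) ` {N..})"
  proof (rule bdd_aboveI2)
    fix n assume "n \<in> {N..}" then show "a n / real n \<le> ln x" using bnd[of n] N1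
      by (simp add: pos_divide_le_eq)
  qed
  define m where "m = N * n1"
  have mN: "m \<ge> N" unfolding m_def using n1 by simp
  have u1: "Uh K x n1 > 1" using Uh_ge[where K=K and x=x and n=n1] K0 x n1 by simp
  have "Uh K x m \<ge> Uh K x n1 ^ N" unfolding m_def using Uh_pow[where K=K and x=x and k=N and n=n1] K0 x by simp
  moreover have "Uh K x n1 ^ N > 1" using u1 N1 by (simp add: one_less_power)
  ultimately have "a m > 0" unfolding a_def by simp
  then have "a m / real m > 0" using mN N1 by simp
  also have "a m / real m \<le> Sup ((\<lambda>n. a n / real n) ` {N..})"
    using bdd mN by (intro cSup_upper) auto
  finally show ?thesis using lim unfolding a_def by blast
qed



lemma powr_young:
  fixes z \<eta> \<gamma> :: real assumes g: "0 < \<gamma>" "\<gamma> < 1" and e: "\<eta> > 0" and z: "z \<ge> 0"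
  shows "z powr \<gamma> \<le> \<eta> * z + \<eta> powr (- \<gamma> / (1 - \<gamma>))"
proof -
  define z0 where "z0 = \<eta> powr (- 1 / (1 - \<gamma>))"
  have z0: "z0 > 0" unfolding z0_def using e by simp
  show ?thesis
  proof (cases "z \<le> z0")
    case True
    have "z powr \<gamma> \<le> z0 powr \<gamma>" using True z g by (intro powr_mono2) auto
    also have "\<dots> = \<eta> powr (- \<gamma> / (1 - \<gamma>))" unfolding z0_def using e by (simp add: powr_powr)
    moreover have "0 \<le> \<eta> * z" using e z by simp
    ultimately show ?thesis by linarith
  next
    case False
    then have zz: "z > z0" by simp
    have "z powr \<gamma> = z powr (\<gamma> - 1) * z" using zz z0 powr_add[of z "\<gamma> - 1" 1] by simp
    also have "z powr (\<gamma> - 1) \<le> z0 powr (\<gamma> - 1)" using zz z0 g by (intro powr_mono2') auto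
    also have "z0 powr (\<gamma> - 1) = \<eta>"
    proof -
      have ex: "- 1 / (1 - \<gamma>) * (\<gamma> - 1) = 1" using g by (simp add: field_simps)
      show ?thesis unfolding z0_def by (simp only: powr_powr ex) (use e in simp)
    qed
    finally have "z powr \<gamma> \<le> \<eta> * z" using z by (simp add: mult_right_mono)
    moreover have "0 \<le> \<eta> powr (- \<gamma> / (1 - \<gamma>))" by simp
    ultimately show ?thesis by linarith
  qed
qed

locale mu = prob_space M for M :: "real measure" +
  assumes sets_M: "sets M = sets borel"
    and expi: "\<And>t. integrable M (\<lambda>x. exp (t * x))"
begin

lemma space_M: "space M = UNIV" using sets_eq_imp_space_eq[OF sets_M] by simp

lemma meas_gt[simp]: "{a<..} \<in> sets M" by (simp add: sets_M)

definition F :: "real \<Rightarrow> real" where "F a = measure M {a<..}"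

lemma F_mono: "a \<le> b \<Longrightarrow> F b \<le> F a"
  unfolding F_def by (intro finite_measure_mono) auto

lemma F_nonneg: "F a \<ge> 0" unfolding F_def by simp

lemma F_right: "(\<lambda>n. F (a + 1 / Suc n)) \<longlonglongrightarrow> F a"
proof -
  have "(\<lambda>n. measure M {a + 1 / Suc n<..}) \<longlonglongrightarrow> measure M (\<Union>n. {a + 1 / Suc n<..})"
  proof (rule finite_Lim_measure_incseq)
    show "incseq (\<lambda>n. {a + 1 / real (Suc n)<..})"
      by (auto simp: incseq_def intro!: frac_le)
  qed auto
  moreover have "(\<Union>n. {a + 1 / Suc n<..}) = {a<..}"
  proof (intro equalityI subsetI)
    fix x assume "x \<in> {a<..}"
    then have "x - a > 0" by simp
    then obtain n :: nat where "1 / Suc n < x - a" using nat_approx_posE by blast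
    then show "x \<in> (\<Union>n. {a + 1 / Suc n<..})" by (intro UN_I[of n]) auto
  next
    fix x assume "x \<in> (\<Union>n. {a + 1 / Suc n<..})"
    then obtain n :: nat where "x > a + 1 / Suc n" by auto
    moreover have "1 / Suc n > (0::real)" by simp
    ultimately show "x \<in> {a<..}" by (smt (verit) greaterThan_iff)
  qed
  ultimately show ?thesis unfolding F_def by simp
qed

lemma F_pos_right: "F a > 0 \<Longrightarrow> \<exists>a'>a. F a' > 0"
proof -
  assume "F a > 0"
  then have "eventually (\<lambda>n. F (a + 1 / Suc n) > 0) sequentially"
    using order_tendstoD(1)[OF F_right] by blast
  then obtain n where "F (a + 1 / Suc n) > 0" by (auto simp: eventually_sequentially)
  moreover have "a + 1 / Suc n > a" by simp
  ultimately show ?thesis by blast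
qed

lemma F_top: "(\<lambda>n. F (real n)) \<longlonglongrightarrow> 0"
proof -
  have "(\<lambda>n. measure M {real n<..}) \<longlonglongrightarrow> measure M (\<Inter>n. {real n<..})"
    by (rule finite_Lim_measure_decseq) (auto simp: decseq_def)
  moreover have "(\<Inter>n. {real n<..}) = {}"
  proof -
    { fix x :: real assume "\<forall>n. x \<in> {real n<..}"
      moreover obtain n where "x < real n" using reals_Archimedean2 by blast
      ultimately have False by (metis greaterThan_iff less_asym) }
    then show ?thesis by auto
  qed
  ultimately show ?thesis unfolding F_def by simp
qed

lemma F_bot: "(\<lambda>n. F (- real n)) \<longlonglongrightarrow> 1"
proof -
  have "(\<lambda>n. measure M {- real n<..}) \<longlonglongrightarrow> measure M (\<Union>n. {- real n<..})"
    by (rule finite_Lim_measure_incseq) (auto simp: incseq_def)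
  moreover have "(\<Union>n. {- real n<..}) = UNIV"
  proof -
    { fix x :: real
      obtain n where "- x < real n" using reals_Archimedean2 by blast
      then have "x \<in> (\<Union>n. {- real n<..})" by (intro UN_I[of n]) auto }
    then show ?thesis by auto
  qed
  ultimately show ?thesis unfolding F_def using prob_space space_M by simp
qed

lemma F_small:
  assumes noatom: "bdd_above (msupport M) \<Longrightarrow> measure M {Sup (msupport M)} = 0"
    and d: "\<delta> > 0"
  shows "\<exists>a. 0 < F a \<and> F a \<le> \<delta>"
proof (cases "\<forall>a. F a > 0")
  case True
  have "eventually (\<lambda>n. F (real n) < \<delta>) sequentially" using order_tendstoD(2)[OF F_top d] .
  then obtain n where "F (real n) < \<delta>" by (auto simp: eventually_sequentially)
  then show ?thesis using True by (intro exI[of _ "real n"]) auto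
next
  case False
  define S where "S = {a. F a = 0}"
  have Sne: "S \<noteq> {}" using False F_nonneg unfolding S_def by (auto simp: not_less intro: antisym)
  have "eventually (\<lambda>n. F (- real n) > 1/2) sequentially" using order_tendstoD(1)[OF F_bot, of "1/2"] by simp
  then obtain b where b: "F b > 1/2" by (auto simp: eventually_sequentially)
  have Sb: "a > b" if "a \<in> S" for a
  proof (rule ccontr)
    assume "\<not> a > b" then have "F b \<le> F a" by (intro F_mono) auto
    then show False using that b unfolding S_def by simp
  qed
  have bdd: "bdd_below S" using Sb by (auto intro!: bdd_belowI[of _ b] less_imp_le)
  define w where "w = Inf S"
  have Fzero: "F a = 0" if "a > w" for a
  proof -
    have "Inf S < a" using that w_def by simp
    then obtain s where "s \<in> S" "s < a" using cInf_lessD[OF Sne] by blast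
    then have "F a \<le> F s" "F s = 0" using F_mono[of s a] by (auto simp: S_def)
    then show ?thesis using F_nonneg[of a] by simp
  qed
  have Fw: "F w = 0"
  proof -
    have "(\<lambda>n. F (w + 1 / Suc n)) \<longlonglongrightarrow> 0" by (subst Fzero) (auto simp: Fzero)
    then show ?thesis using F_right LIMSEQ_unique by blast
  qed
  have Fpos: "F a > 0" if "a < w" for a
  proof (rule ccontr)
    assume "\<not> F a > 0" then have "a \<in> S" using F_nonneg[of a] unfolding S_def by simp
    then have "w \<le> a" unfolding w_def using bdd by (intro cInf_lower)
    then show False using that by simp
  qed
  have null_gt: "emeasure M {w<..} = 0" using Fw unfolding F_def by (simp add: emeasure_eq_measure)
  have wsupp: "w \<in> msupport M"
    unfolding msupport_def
  proof (intro CollectI allI impI)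
    fix e :: real assume e: "e > 0"
    have "{w - e<..} \<subseteq> ball w e \<union> {w<..}" by (auto simp: dist_real_def)
    then have "F (w - e) \<le> measure M (ball w e \<union> {w<..})" unfolding F_def
      by (intro finite_measure_mono) (auto simp: sets_M)
    also have "\<dots> \<le> measure M (ball w e) + F w" unfolding F_def
      by (intro measure_Un_le) (auto simp: sets_M)
    finally have "measure M (ball w e) > 0" using Fpos[of "w - e"] e Fw by simp
    then show "emeasure M (ball w e) > 0" by (simp add: emeasure_eq_measure)
  qed
  have supp_le: "x \<le> w" if "x \<in> msupport M" for x
  proof (rule ccontr)
    assume "\<not> x \<le> w"
    then have "ball x (x - w) \<subseteq> {w<..}" by (auto simp: dist_real_def)
    then have "emeasure M (ball x (x - w)) \<le> emeasure M {w<..}" by (intro emeasure_mono) auto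
    moreover have "emeasure M (ball x (x - w)) > 0" using that \<open>\<not> x \<le> w\<close> unfolding msupport_def by auto
    ultimately show False using null_gt by simp
  qed
  have bddS: "bdd_above (msupport M)" using supp_le by (intro bdd_aboveI[of _ w]) auto
  have "Sup (msupport M) = w" using wsupp supp_le by (intro cSup_eq_maximum) auto
  then have atom: "measure M {w} = 0" using noatom bddS by simp
  have lim: "(\<lambda>n. F (w - 1 / Suc n)) \<longlonglongrightarrow> measure M (\<Inter>n. {w - 1 / Suc n<..})"
    unfolding F_def
  proof (rule finite_Lim_measure_decseq)
    show "decseq (\<lambda>n. {w - 1 / real (Suc n)<..})"
    proof (rule decseq_SucI)
      fix n :: nat
      have "1 / real (Suc (Suc n)) \<le> 1 / real (Suc n)" by (intro divide_left_mono) auto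
      then show "{w - 1 / real (Suc (Suc n))<..} \<subseteq> {w - 1 / real (Suc n)<..}" by auto
    qed
  qed auto
  have "(\<Inter>n. {w - 1 / Suc n<..}) \<subseteq> {w} \<union> {w<..}"
  proof
    fix x assume x: "x \<in> (\<Inter>n. {w - 1 / Suc n<..})"
    have "x \<ge> w"
    proof (rule ccontr)
      assume "\<not> x \<ge> w"
      then have "w - x > 0" by simp
      then obtain n :: nat where "1 / Suc n < w - x" using nat_approx_posE by blast
      moreover have "x \<in> {w - 1 / Suc n<..}" using x by blast
      ultimately show False by simp
    qed
    then show "x \<in> {w} \<union> {w<..}" by auto
  qed
  then have "measure M (\<Inter>n. {w - 1 / Suc n<..}) \<le> measure M ({w} \<union> {w<..})"
    by (intro finite_measure_mono) (auto simp: sets_M)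
  also have "\<dots> \<le> measure M {w} + F w" unfolding F_def
    by (intro measure_Un_le) (auto simp: sets_M)
  finally have "measure M (\<Inter>n. {w - 1 / Suc n<..}) = 0" using atom Fw by (simp add: antisym)
  then have "eventually (\<lambda>n. F (w - 1 / Suc n) < \<delta>) sequentially"
    using order_tendstoD(2)[OF lim] d by simp
  then obtain n where "F (w - 1 / Suc n) < \<delta>" by (auto simp: eventually_sequentially)
  moreover have "F (w - 1 / Suc n) > 0" by (intro Fpos) simp
  ultimately show ?thesis by (intro exI[of _ "w - 1 / Suc n"]) auto
qed

definition mgf :: "real \<Rightarrow> real" where "mgf t = (\<integral>x. exp (t * x) \<partial>M)"

lemma integrable_id: "integrable M (\<lambda>x. x)"
proof -
  have i: "integrable M (\<lambda>x. exp (1 * x) + exp ((-1) * x))" by (rule Bochner_Integration.integrable_add[OF expi expi])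
  have m: "(\<lambda>x. x) \<in> borel_measurable M" by (simp add: measurable_cong_sets[OF sets_M refl])
  have ae: "AE x in M. norm x \<le> norm (exp (1 * x) + exp ((-1) * x))"
  proof (intro AE_I2)
    fix x :: real
    have "\<bar>x\<bar> \<le> exp \<bar>x\<bar>" using exp_ge_add_one_self[of "\<bar>x\<bar>"] by linarith
    also have "\<dots> \<le> exp x + exp (- x)" by (cases "x \<ge> 0") auto
    finally show "norm x \<le> norm (exp (1 * x) + exp ((-1) * x))" by simp
  qed
  show ?thesis by (rule Bochner_Integration.integrable_bound[OF i m ae])
qed

lemma mgf_ge1: assumes mean: "(\<integral>x. x \<partial>M) = 0" shows "mgf t \<ge> 1"
proof -
  have "(\<integral>x. 1 + t * x \<partial>M) \<le> mgf t" unfolding mgf_def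
    using integrable_id expi by (intro integral_mono) (auto simp: exp_ge_add_one_self)
  moreover have "(\<integral>x. 1 + t * x \<partial>M) = 1" using integrable_id mean prob_space by simp
  ultimately show ?thesis by simp
qed

lemma mgf_lower: "t \<ge> 0 \<Longrightarrow> mgf t \<ge> exp (t * a) * F a"
proof -
  assume t: "t \<ge> 0"
  have "(\<integral>x. exp (t * a) * indicator {a<..} x \<partial>M) \<le> mgf t" unfolding mgf_def
  proof (intro integral_mono)
    show "integrable M (\<lambda>x. exp (t * a) * indicator {a<..} x :: real)"
      by (intro integrable_mult_right integrable_real_indicator) (auto simp: less_top[symmetric])
    fix x show "exp (t * a) * indicator {a<..} x \<le> exp (t * x)"
      using t by (auto simp: indicator_def mult_left_mono)
  qed (use expi in auto)
  then show ?thesis by (simp add: F_def space_M)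
qed

lemma F0_pos: assumes mean: "(\<integral>x. x \<partial>M) = 0" and var: "(\<integral>x. x\<^sup>2 \<partial>M) = 1" shows "F 0 > 0"
proof (rule ccontr)
  assume "\<not> F 0 > 0"
  then have "F 0 = 0" using F_nonneg[of 0] by simp
  then have "{0<..} \<in> null_sets M" unfolding F_def by (simp add: null_sets_def emeasure_eq_measure)
  then have "AE x in M. x \<notin> {0<..}" by (rule AE_not_in)
  then have ae: "AE x in M. 0 \<le> - x" by eventually_elim auto
  have "(\<integral>x. - x \<partial>M) = 0" using mean by simp
  then have "AE x in M. - x = 0" using integral_nonneg_eq_0_iff_AE[OF _ ae] integrable_id by simp
  then have "AE x in M. x\<^sup>2 = 0" by eventually_elim auto
  then have "(\<integral>x. x\<^sup>2 \<partial>M) = (\<integral>x. 0 \<partial>M)" by (intro integral_cong_AE) (auto simp: measurable_cong_sets[OF sets_M refl])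
  then show False using var by simp
qed

lemma mgf_unbounded:
  assumes mean: "(\<integral>x. x \<partial>M) = 0" and var: "(\<integral>x. x\<^sup>2 \<partial>M) = 1"
  shows "\<exists>B. \<forall>t\<ge>B. mgf t \<ge> T"
proof -
  obtain a where a: "a > 0" "F a > 0" using F_pos_right[OF F0_pos[OF mean var]] by auto
  define T' where "T' = max T 1"
  define B where "B = max 0 (ln (T' / F a) / a)"
  have "mgf t \<ge> T" if t: "t \<ge> B" for t
  proof -
    have "t * a \<ge> ln (T' / F a)" using t a unfolding B_def by (simp add: pos_divide_le_eq)
    then have "exp (t * a) \<ge> T' / F a" using a unfolding T'_def
      by (metis exp_le_cancel_iff exp_ln divide_pos_pos max.strict_coboundedI2 zero_less_one)
    then have "exp (t * a) * F a \<ge> T'" using a by (simp add: pos_divide_le_eq)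
    moreover have "mgf t \<ge> exp (t * a) * F a" using t unfolding B_def by (intro mgf_lower) simp
    ultimately show ?thesis unfolding T'_def by simp
  qed
  then show ?thesis by blast
qed

lemma ratio_small:
  assumes noatom: "bdd_above (msupport M) \<Longrightarrow> measure M {Sup (msupport M)} = 0"
    and mean: "(\<integral>x. x \<partial>M) = 0"
    and g: "0 < \<gamma>" "\<gamma> < 1" and c: "c > 0"
  shows "\<exists>B>0. \<forall>\<beta>\<ge>B. mgf (\<gamma> * \<beta>) \<le> c * mgf \<beta> powr \<gamma>"
proof -
  define \<eta> where "\<eta> = c / 3"
  have e: "\<eta> > 0" unfolding \<eta>_def using c by simp
  define C where "C = \<eta> powr (- \<gamma> / (1 - \<gamma>))"
  have C: "C > 0" unfolding C_def using e by simp
  obtain a where a: "0 < F a" "F a \<le> \<eta> / C" using F_small[OF noatom, of "\<eta> / C"] e C by auto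
  obtain a' where a': "a' > a" "F a' > 0" using F_pos_right[OF a(1)] by auto
  define q where "q = \<eta> powr (1 / \<gamma>) * F a'"
  have q: "q > 0" unfolding q_def using e a' by simp
  define B where "B = max 1 (- ln q / (a' - a))"
  have "mgf (\<gamma> * \<beta>) \<le> c * mgf \<beta> powr \<gamma>" if b: "\<beta> \<ge> B" for \<beta>
  proof -
    have b1: "\<beta> \<ge> 1" using b unfolding B_def by simp
    define Mb where "Mb = mgf \<beta>"
    have Mb: "Mb > 0" unfolding Mb_def using mgf_ge1[OF mean] by (smt (verit))
    have Mlow: "Mb \<ge> exp (\<beta> * a') * F a'" unfolding Mb_def using b1 by (intro mgf_lower) simp
    have pt: "exp (\<gamma> * \<beta> * y) \<le> exp (\<gamma> * \<beta> * a) + (Mb powr \<gamma> * \<eta> / Mb) * exp (\<beta> * y)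
        + (Mb powr \<gamma> * C) * indicator {a<..} y" for y
    proof (cases "y \<le> a")
      case True
      have "exp (\<gamma> * \<beta> * y) \<le> exp (\<gamma> * \<beta> * a)" using True g b1 by (simp add: mult_left_mono)
      moreover have "0 \<le> (Mb powr \<gamma> * \<eta> / Mb) * exp (\<beta> * y)" using Mb e by simp
      moreover have "0 \<le> (Mb powr \<gamma> * C) * indicator {a<..} y" using C by simp
      ultimately show ?thesis by linarith
    next
      case False
      define z where "z = exp (\<beta> * y) / Mb"
      have z: "z \<ge> 0" unfolding z_def using Mb by simp
      have "exp (\<gamma> * \<beta> * y) = exp (\<beta> * y) powr \<gamma>" by (simp add: powr_def mult_ac)
      also have "exp (\<beta> * y) = Mb * z" unfolding z_def using Mb by simp
      also have "(Mb * z) powr \<gamma> = Mb powr \<gamma> * z powr \<gamma>" using Mb z by (simp add: powr_mult)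
      also have "\<dots> \<le> Mb powr \<gamma> * (\<eta> * z + C)" unfolding C_def
        using powr_young[OF g e z] by (intro mult_left_mono) auto
      also have "\<dots> = (Mb powr \<gamma> * \<eta> / Mb) * exp (\<beta> * y) + (Mb powr \<gamma> * C) * indicator {a<..} y"
        using False Mb unfolding z_def by (simp add: field_simps)
      finally show ?thesis using exp_ge_zero[of "\<gamma> * \<beta> * a"] by linarith
    qed
    have int1: "integrable M (\<lambda>y. exp (\<gamma> * \<beta> * a) + (Mb powr \<gamma> * \<eta> / Mb) * exp (\<beta> * y) :: real)"
      using expi prob_space by (intro Bochner_Integration.integrable_add integrable_mult_right) auto
    have int2: "integrable M (\<lambda>y. (Mb powr \<gamma> * C) * indicator {a<..} y :: real)"
      by (intro integrable_mult_right integrable_real_indicator) (auto simp: less_top[symmetric])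
    define c1 where "c1 = Mb powr \<gamma> * \<eta> / Mb"
    define c2 where "c2 = Mb powr \<gamma> * C"
    define A where "A = exp (\<gamma> * \<beta> * a)"
    have i1: "integrable M (\<lambda>y. A + c1 * exp (\<beta> * y) :: real)"
      unfolding A_def c1_def by (rule int1)
    have i2: "integrable M (\<lambda>y. c2 * indicator {a<..} y :: real)" unfolding c2_def by (rule int2)
    have i3: "integrable M (\<lambda>y. c1 * exp (\<beta> * y) :: real)" by (intro integrable_mult_right expi)
    have ic: "integrable M (\<lambda>y. A :: real)" by simp
    have "mgf (\<gamma> * \<beta>) \<le> (\<integral>y. A + c1 * exp (\<beta> * y) + c2 * indicator {a<..} y \<partial>M)" unfolding mgf_def
    proof (rule integral_mono[OF expi Bochner_Integration.integrable_add[OF i1 i2]])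
      fix y show "exp (\<gamma> * \<beta> * y) \<le> A + c1 * exp (\<beta> * y) + c2 * indicator {a<..} y"
        using pt[of y] unfolding A_def c1_def c2_def by simp
    qed
    also have "\<dots> = (\<integral>y. A + c1 * exp (\<beta> * y) \<partial>M) + (\<integral>y. c2 * indicator {a<..} y \<partial>M)"
      by (rule Bochner_Integration.integral_add[OF i1 i2])
    also have "(\<integral>y. A + c1 * exp (\<beta> * y) \<partial>M) = (\<integral>y. A \<partial>M) + (\<integral>y. c1 * exp (\<beta> * y) \<partial>M)"
      by (rule Bochner_Integration.integral_add[OF ic i3])
    also have "(\<integral>y. A \<partial>M) = A" using prob_space by simp
    also have "(\<integral>y. c1 * exp (\<beta> * y) \<partial>M) = c1 * Mb" unfolding Mb_def mgf_def by simp
    also have "(\<integral>y. c2 * indicator {a<..} y \<partial>M) = c2 * F a" by (simp add: F_def space_M)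
    finally have "mgf (\<gamma> * \<beta>) \<le> exp (\<gamma> * \<beta> * a) + (Mb powr \<gamma> * \<eta> / Mb) * Mb + (Mb powr \<gamma> * C) * F a"
      unfolding A_def c1_def c2_def .
    then have "mgf (\<gamma> * \<beta>) \<le> exp (\<gamma> * \<beta> * a) + (Mb powr \<gamma> * \<eta> / Mb) * Mb + (Mb powr \<gamma> * C) * F a" .
    also have "(Mb powr \<gamma> * \<eta> / Mb) * Mb = \<eta> * Mb powr \<gamma>" using Mb by simp
    also have "(Mb powr \<gamma> * C) * F a \<le> \<eta> * Mb powr \<gamma>"
    proof -
      have "C * F a \<le> \<eta>" using a C by (simp add: field_simps)
      then show ?thesis using Mb by (simp add: mult_left_mono mult_ac)
    qed
    also have "exp (\<gamma> * \<beta> * a) \<le> \<eta> * Mb powr \<gamma>"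
    proof -
      have d: "a' - a > 0" using a' by simp
      have "- ln q / (a' - a) \<le> \<beta>" using b unfolding B_def by simp
      then have "\<beta> * (a' - a) \<ge> - ln q" using d by (simp only: pos_divide_le_eq)
      then have "exp (- (\<beta> * (a' - a))) \<le> exp (ln q)" by simp
      then have "exp (- (\<beta> * (a' - a))) \<le> q" using q by simp
      have ee: "\<beta> * a = - (\<beta> * (a' - a)) + \<beta> * a'" by (simp add: algebra_simps)
      have "exp (\<beta> * a) = exp (- (\<beta> * (a' - a))) * exp (\<beta> * a')"
        by (subst ee, rule exp_add)
      also have "\<dots> \<le> q * exp (\<beta> * a')" using \<open>exp (- (\<beta> * (a' - a))) \<le> q\<close> by (intro mult_right_mono) auto
      also have "\<dots> \<le> \<eta> powr (1 / \<gamma>) * Mb" unfolding q_def using Mlow e by (simp add: mult_left_mono mult_ac)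
      finally have "exp (\<beta> * a) \<le> \<eta> powr (1 / \<gamma>) * Mb" .
      then have "exp (\<beta> * a) powr \<gamma> \<le> (\<eta> powr (1 / \<gamma>) * Mb) powr \<gamma>" using g by (intro powr_mono2) auto
      also have "\<dots> = \<eta> * Mb powr \<gamma>" using e Mb g by (simp add: powr_mult powr_powr)
      also have "exp (\<beta> * a) powr \<gamma> = exp (\<gamma> * \<beta> * a)" by (simp add: powr_def mult_ac)
      finally show ?thesis .
    qed
    finally show ?thesis unfolding Mb_def \<eta>_def by simp
  qed
  moreover have "B > 0" unfolding B_def by simp
  ultimately show ?thesis by blast
qed

end


declare sum.lessThan_Suc [simp del]

lemma powr_add_le:
  fixes a b g :: real assumes g: "0 < g" "g \<le> 1" and ab: "a \<ge> 0" "b \<ge> 0"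
  shows "(a + b) powr g \<le> a powr g + b powr g"
proof (cases "a + b = 0")
  case True then show ?thesis using ab by simp
next
  case False
  define s where "s = a + b"
  have s: "s > 0" using False ab unfolding s_def by simp
  have t: "(x / s) \<le> (x / s) powr g" if "0 \<le> x" "x \<le> s" for x
  proof -
    have "(x / s) powr 1 \<le> (x / s) powr g" using g that s by (intro powr_mono') auto
    then show ?thesis using that s by simp
  qed
  have "x powr g = s powr g * (x / s) powr g" if "0 \<le> x" for x
    using that s by (simp add: powr_divide)
  then have "a powr g + b powr g = s powr g * ((a / s) powr g + (b / s) powr g)" using ab
    by (simp add: distrib_left)
  also have "\<dots> \<ge> s powr g * (a / s + b / s)" using t[of a] t[of b] ab s unfolding s_def
    by (intro mult_left_mono add_mono) auto
  moreover have "a / s + b / s = 1" using s unfolding s_def by (simp add: add_divide_distrib[symmetric])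
  ultimately show ?thesis unfolding s_def by simp
qed

lemma powr_sum_le:
  fixes f :: "'a \<Rightarrow> real" assumes g: "0 < g" "g \<le> 1" and fin: "finite A" and f: "\<And>i. i \<in> A \<Longrightarrow> f i \<ge> 0"
  shows "(\<Sum>i\<in>A. f i) powr g \<le> (\<Sum>i\<in>A. f i powr g)"
  using fin f
proof (induction A rule: finite_induct)
  case empty then show ?case by simp
next
  case (insert x A)
  have "(\<Sum>i\<in>insert x A. f i) powr g = (f x + (\<Sum>i\<in>A. f i)) powr g" using insert by simp
  also have "\<dots> \<le> f x powr g + (\<Sum>i\<in>A. f i) powr g"
    using insert g by (intro powr_add_le) (auto intro: sum_nonneg)
  also have "\<dots> \<le> f x powr g + (\<Sum>i\<in>A. f i powr g)" using insert by simp
  finally show ?case using insert by simp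
qed

lemma Zr_nonneg: "(\<And>n. K n \<ge> 0) \<Longrightarrow> Zr K \<beta> h \<omega> n \<ge> 0"
proof (induction n rule: less_induct)
  case (less n) then show ?case by (cases n) (auto intro!: sum_nonneg mult_nonneg_nonneg)
qed

lemma Zr_ge: "(\<And>n. K n \<ge> 0) \<Longrightarrow> n \<ge> 1 \<Longrightarrow> Zr K \<beta> h \<omega> n \<ge> K n * exp (\<beta> * \<omega> 0 - h)"
proof -
  assume K0: "\<And>n. K n \<ge> 0" and n: "n \<ge> 1"
  then obtain k where k: "n = Suc k" by (cases n) auto
  have "Zr K \<beta> h \<omega> n = Zr K \<beta> h \<omega> 0 * K (Suc k - 0) * exp (\<beta> * \<omega> 0 - h)
      + (\<Sum>m\<in>{..<Suc k}-{0}. Zr K \<beta> h \<omega> m * K (Suc k - m) * exp (\<beta> * \<omega> m - h))"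
    unfolding k Zr.simps by (subst sum.remove[of _ 0]) auto
  also have "\<dots> \<ge> Zr K \<beta> h \<omega> 0 * K (Suc k - 0) * exp (\<beta> * \<omega> 0 - h)"
    using Zr_nonneg[OF K0] K0 by (auto intro!: sum_nonneg)
  finally show ?thesis using k by simp
qed

context mu
begin

abbreviation P where "P \<equiv> env M"

lemma P_def': "P = PiM UNIV (\<lambda>_. M)" by (simp add: env_def)

lemma prob_P: "prob_space P"
  unfolding env_def by (rule prob_space_PiM) (rule prob_space_axioms)

lemma coord_meas[measurable]: "(\<lambda>\<omega>. \<omega> i) \<in> measurable P M"
  unfolding env_def by (rule measurable_component_singleton) simp

lemma coord_meas_borel: "(\<lambda>\<omega>. \<omega> i) \<in> borel_measurable P"
  using coord_meas by (simp add: measurable_cong_sets[OF refl sets_M])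

lemma distr_coord: "distr P M (\<lambda>\<omega>. \<omega> i) = M"
  unfolding env_def by (rule distr_PiM_component) (auto intro: prob_space_axioms)

lemma integrable_coord: "integrable M (g::real\<Rightarrow>real) \<Longrightarrow> integrable P (\<lambda>\<omega>. g (\<omega> i))"
proof -
  assume g: "integrable M g"
  then have gm: "g \<in> borel_measurable M" by auto
  have "integrable (distr P M (\<lambda>\<omega>. \<omega> i)) g" using g by (simp add: distr_coord)
  then show ?thesis by (subst (asm) integrable_distr_eq[where g="\<lambda>\<omega>. \<omega> i" and M=P and N=M and f=g, OF coord_meas gm])
qed

lemma integral_coord: "(g::real\<Rightarrow>real) \<in> borel_measurable M \<Longrightarrow> (\<integral>\<omega>. g (\<omega> i) \<partial>P) = (\<integral>x. g x \<partial>M)"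
proof -
  assume gm: "g \<in> borel_measurable M"
  have "(\<integral>x. g x \<partial>M) = integral\<^sup>L (distr P M (\<lambda>\<omega>. \<omega> i)) g" by (simp add: distr_coord)
  also have "\<dots> = (\<integral>\<omega>. g (\<omega> i) \<partial>P)" by (rule integral_distr[where g="\<lambda>\<omega>. \<omega> i" and M=P and N=M and f=g, OF coord_meas gm])
  finally show ?thesis by simp
qed

lemma indep_coords: "prob_space.indep_vars P (\<lambda>_. M) (\<lambda>i \<omega>. \<omega> i) UNIV"
proof -
  interpret P: prob_space P by (rule prob_P)
  have "distr P (PiM UNIV (\<lambda>_. M)) (\<lambda>x. \<lambda>i\<in>UNIV. x i) = PiM UNIV (\<lambda>i. distr P M (\<lambda>\<omega>. \<omega> i))"
  proof -
    have "(\<lambda>x. \<lambda>i\<in>UNIV. x i) = (\<lambda>x::nat \<Rightarrow> real. x)" by (simp add: restrict_def)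
    then have "distr P (PiM UNIV (\<lambda>_. M)) (\<lambda>x. \<lambda>i\<in>UNIV. x i) = P"
      by (simp add: env_def distr_id)
    then show ?thesis using distr_coord by (simp add: env_def)
  qed
  then show ?thesis
    by (subst P.indep_vars_iff_distr_eq_PiM') (auto simp: coord_meas)
qed

lemma indep_block:
  fixes G :: "(nat \<Rightarrow> real) \<Rightarrow> real" and g :: "real \<Rightarrow> real"
  assumes G: "G \<in> borel_measurable (PiM {..<m} (\<lambda>_. M))" and g: "g \<in> borel_measurable M"
  shows "prob_space.indep_var P borel (\<lambda>\<omega>. G (restrict \<omega> {..<m})) borel (\<lambda>\<omega>. g (\<omega> m))"
proof -
  interpret P: prob_space P by (rule prob_P)
  define K where "K = (\<lambda>b::bool. if b then {..<m} else {m})"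
  have "P.indep_vars (\<lambda>b. PiM (K b) (\<lambda>_. M)) (\<lambda>b \<omega>. restrict (\<lambda>i. \<omega> i) (K b)) UNIV"
    by (rule P.indep_vars_restrict[OF indep_coords]) (auto simp: K_def disjoint_family_on_def)
  then have ind: "P.indep_vars (\<lambda>b. PiM (K b) (\<lambda>_. M)) (\<lambda>b \<omega>. restrict \<omega> (K b)) UNIV" by simp
  define Y where "Y = (\<lambda>b::bool. if b then G else (\<lambda>f. g (f m)))"
  have Ym: "Y b \<in> measurable (PiM (K b) (\<lambda>_. M)) borel" for b
  proof (cases b)
    case True then show ?thesis using G by (simp add: Y_def K_def)
  next
    case False
    have "(\<lambda>f. f m) \<in> measurable (PiM {m} (\<lambda>_. M)) M" by (rule measurable_component_singleton) simp
    then show ?thesis using False g by (simp add: Y_def K_def)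
  qed
  have i2: "P.indep_vars (\<lambda>_. borel) (\<lambda>b \<omega>. Y b (restrict \<omega> (K b))) UNIV"
    by (rule P.indep_vars_compose2[OF ind Ym])
  have e1: "(\<lambda>b \<omega>. Y b (restrict \<omega> (K b))) = case_bool (\<lambda>\<omega>. G (restrict \<omega> {..<m})) (\<lambda>\<omega>. g (\<omega> m))"
    by (auto simp: fun_eq_iff Y_def K_def split: bool.split)
  have e2: "case_bool borel borel = (\<lambda>_::bool. borel :: real measure)"
    by (auto simp: fun_eq_iff split: bool.split)
  show ?thesis unfolding P.indep_var_def e2 using i2 unfolding e1 .
qed

lemma Zr_restrict: "m \<le> N \<Longrightarrow> Zr K \<beta> h (restrict \<omega> {..<N}) m = Zr K \<beta> h \<omega> m"
proof (induction m rule: less_induct)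
  case (less m)
  show ?case
  proof (cases m)
    case (Suc k)
    show ?thesis unfolding Suc Zr.simps
    proof (intro sum.cong refl)
      fix x assume x: "x \<in> {..<Suc k}"
      have "Zr K \<beta> h (restrict \<omega> {..<N}) x = Zr K \<beta> h \<omega> x" by (rule less.IH) (use x less.prems Suc in auto)
      moreover have "restrict \<omega> {..<N} x = \<omega> x" using x less.prems Suc by simp
      ultimately show "Zr K \<beta> h (restrict \<omega> {..<N}) x * K (Suc k - x) * exp (\<beta> * restrict \<omega> {..<N} x - h) =
          Zr K \<beta> h \<omega> x * K (Suc k - x) * exp (\<beta> * \<omega> x - h)" by simp
    qed
  qed simp
qed

lemma comp_blk: "j < N \<Longrightarrow> (\<lambda>\<omega>. \<omega> j) \<in> borel_measurable (PiM {..<N} (\<lambda>_. M))"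
proof -
  assume "j < N"
  then have "(\<lambda>\<omega>. \<omega> j) \<in> measurable (PiM {..<N} (\<lambda>_. M)) M" by (intro measurable_component_singleton) auto
  then show ?thesis by (simp add: measurable_cong_sets[OF refl sets_M])
qed

lemma Zr_meas_blk: "m \<le> N \<Longrightarrow> (\<lambda>\<omega>. Zr K \<beta> h \<omega> m) \<in> borel_measurable (PiM {..<N} (\<lambda>_. M))"
proof (induction m rule: less_induct)
  case (less m)
  show ?case
  proof (cases m)
    case (Suc k)
    have c: "(\<lambda>\<omega>. \<omega> j) \<in> borel_measurable (PiM {..<N} (\<lambda>_. M))" if "j < Suc k" for j
      using comp_blk[of j N] that less.prems Suc by simp
    have z: "(\<lambda>\<omega>. Zr K \<beta> h \<omega> j) \<in> borel_measurable (PiM {..<N} (\<lambda>_. M))" if "j < Suc k" for j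
      using less that Suc by simp
    show ?thesis unfolding Suc Zr.simps
    proof (intro borel_measurable_sum borel_measurable_times borel_measurable_const)
      fix j assume j: "j \<in> {..<Suc k}"
      show "(\<lambda>\<omega>. Zr K \<beta> h \<omega> j) \<in> borel_measurable (PiM {..<N} (\<lambda>_. M))" using z j by simp
      have "(\<lambda>\<omega>. \<beta> * \<omega> j - h) \<in> borel_measurable (PiM {..<N} (\<lambda>_. M))"
        using c[of j] j by (intro borel_measurable_diff borel_measurable_times borel_measurable_const) auto
      then show "(\<lambda>\<omega>. exp (\<beta> * \<omega> j - h)) \<in> borel_measurable (PiM {..<N} (\<lambda>_. M))"
        by (rule measurable_compose[OF _ borel_measurable_exp])
    qed
  qed simp
qed

lemma Zr_meas_P: "(\<lambda>\<omega>. Zr K \<beta> h \<omega> m) \<in> borel_measurable P"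
proof (induction m rule: less_induct)
  case (less m)
  show ?case
  proof (cases m)
    case (Suc k)
    show ?thesis unfolding Suc Zr.simps
    proof (intro borel_measurable_sum borel_measurable_times borel_measurable_const)
      fix j assume j: "j \<in> {..<Suc k}"
      show "(\<lambda>\<omega>. Zr K \<beta> h \<omega> j) \<in> borel_measurable P" using less j Suc by simp
      have "(\<lambda>\<omega>. \<beta> * \<omega> j - h) \<in> borel_measurable P"
        using coord_meas_borel[of j] by (intro borel_measurable_diff borel_measurable_times borel_measurable_const) auto
      then show "(\<lambda>\<omega>. exp (\<beta> * \<omega> j - h)) \<in> borel_measurable P"
        by (rule measurable_compose[OF _ borel_measurable_exp])
    qed
  qed simp
qed

lemma Zr_restrict_fun: "(\<lambda>\<omega>. Zr K \<beta> h (restrict \<omega> {..<m}) m) = (\<lambda>\<omega>. Zr K \<beta> h \<omega> m)"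
  by (simp add: Zr_restrict)

lemma indep_Zr:
  fixes G :: "real \<Rightarrow> real" and g :: "real \<Rightarrow> real"
  assumes "G \<in> borel_measurable borel" and "g \<in> borel_measurable M"
  shows "prob_space.indep_var P borel (\<lambda>\<omega>. G (Zr K \<beta> h \<omega> m)) borel (\<lambda>\<omega>. g (\<omega> m))"
proof -
  have "(\<lambda>f. G (Zr K \<beta> h f m)) \<in> borel_measurable (PiM {..<m} (\<lambda>_. M))"
    using Zr_meas_blk[of m m K \<beta> h] assms(1) by (intro measurable_compose[OF _ assms(1)]) auto
  from indep_block[OF this assms(2)] show ?thesis by (simp add: Zr_restrict)
qed

lemma g_int: "integrable M (\<lambda>y. c * exp (\<beta> * y - h))"
proof -
  have "(\<lambda>y. c * exp (\<beta> * y - h)) = (\<lambda>y. (c * exp (- h)) * exp (\<beta> * y))"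
    by (simp add: exp_diff exp_minus field_simps)
  then show ?thesis using expi by (simp add: integrable_mult_right)
qed

lemma g_integral: "(\<integral>y. c * exp (\<beta> * y - h) \<partial>M) = c * exp (- h) * mgf \<beta>"
proof -
  have "(\<lambda>y. c * exp (\<beta> * y - h)) = (\<lambda>y. (c * exp (- h)) * exp (\<beta> * y))"
    by (simp add: exp_diff exp_minus field_simps)
  then show ?thesis by (simp add: mgf_def)
qed

lemma Zr_expect:
  "integrable P (\<lambda>\<omega>. Zr K \<beta> h \<omega> n) \<and> (\<integral>\<omega>. Zr K \<beta> h \<omega> n \<partial>P) = Uh K (mgf \<beta> * exp (- h)) n"
proof (induction n rule: less_induct)
  case (less n)
  interpret P: prob_space P by (rule prob_P)
  show ?case
  proof (cases n)
    case 0 then show ?thesis by (simp add: P.prob_space)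
  next
    case (Suc k)
    define g where "g m y = K (Suc k - m) * exp (\<beta> * y - h)" for m y
    have eq: "(\<lambda>\<omega>. Zr K \<beta> h \<omega> n) = (\<lambda>\<omega>. \<Sum>m<Suc k. Zr K \<beta> h \<omega> m * g m (\<omega> m))"
      unfolding Suc g_def by (simp add: mult.assoc)
    have trm: "integrable P (\<lambda>\<omega>. Zr K \<beta> h \<omega> m * g m (\<omega> m)) \<and>
       (\<integral>\<omega>. Zr K \<beta> h \<omega> m * g m (\<omega> m) \<partial>P) = Uh K (mgf \<beta> * exp (- h)) m * K (Suc k - m) * (mgf \<beta> * exp (- h))"
      if m: "m < Suc k" for m
    proof -
      have gm: "g m \<in> borel_measurable M" using g_int[of "K (Suc k - m)" \<beta> h] unfolding g_def by auto
      have ind: "P.indep_var borel (\<lambda>\<omega>. Zr K \<beta> h \<omega> m) borel (\<lambda>\<omega>. g m (\<omega> m))"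
        using indep_Zr[of "\<lambda>x. x" "g m" K \<beta> h m] gm by simp
      have i1: "integrable P (\<lambda>\<omega>. Zr K \<beta> h \<omega> m)" using less m Suc by simp
      have i2: "integrable P (\<lambda>\<omega>. g m (\<omega> m))" unfolding g_def by (rule integrable_coord[OF g_int])
      have "(\<integral>\<omega>. g m (\<omega> m) \<partial>P) = (\<integral>y. g m y \<partial>M)" by (rule integral_coord[OF gm])
      also have "\<dots> = K (Suc k - m) * exp (- h) * mgf \<beta>" unfolding g_def by (rule g_integral)
      finally have "(\<integral>\<omega>. g m (\<omega> m) \<partial>P) = K (Suc k - m) * exp (- h) * mgf \<beta>" .
      then show ?thesis using P.indep_var_lebesgue_integral[OF ind i1 i2] P.indep_var_integrable[OF ind i1 i2]
        less m Suc by (simp add: mult_ac)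
    qed
    have "integrable P (\<lambda>\<omega>. Zr K \<beta> h \<omega> n)" unfolding eq using trm by (intro Bochner_Integration.integrable_sum) auto
    moreover have "(\<integral>\<omega>. Zr K \<beta> h \<omega> n \<partial>P) = Uh K (mgf \<beta> * exp (- h)) n"
      unfolding eq using trm by (subst Bochner_Integration.integral_sum) (auto simp: Suc)
    ultimately show ?thesis by simp
  qed
qed

lemma frac_moment:
  assumes K0: "\<And>n. K n \<ge> 0" and g: "0 < \<gamma>" "\<gamma> < 1"
    and hsum: "\<And>N. (\<Sum>m<N. K (N - m) powr \<gamma> * exp (- (\<gamma> * h)) * mgf (\<gamma> * \<beta>)) \<le> 1"
  shows "integrable P (\<lambda>\<omega>. Zr K \<beta> h \<omega> n powr \<gamma>) \<and> (\<integral>\<omega>. Zr K \<beta> h \<omega> n powr \<gamma> \<partial>P) \<le> 1"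
proof (induction n rule: less_induct)
  case (less n)
  interpret P: prob_space P by (rule prob_P)
  have nn: "\<And>\<omega> m. Zr K \<beta> h \<omega> m \<ge> 0" using Zr_nonneg[OF K0] .
  have intg: "integrable P (\<lambda>\<omega>. Zr K \<beta> h \<omega> m powr \<gamma>)" for m
  proof (rule Bochner_Integration.integrable_bound)
    show "integrable P (\<lambda>\<omega>. 1 + Zr K \<beta> h \<omega> m)"
      using Zr_expect[of K \<beta> h m] by (intro Bochner_Integration.integrable_add) auto
    show "(\<lambda>\<omega>. Zr K \<beta> h \<omega> m powr \<gamma>) \<in> borel_measurable P"
      using Zr_meas_P[of K \<beta> h m] by measurable
    show "AE \<omega> in P. norm (Zr K \<beta> h \<omega> m powr \<gamma>) \<le> norm (1 + Zr K \<beta> h \<omega> m)"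
    proof (intro AE_I2)
      fix \<omega>
      define z where "z = Zr K \<beta> h \<omega> m"
      have z: "z \<ge> 0" unfolding z_def by (rule nn)
      have "z powr \<gamma> \<le> 1 + z"
      proof (cases "z \<le> 1")
        case True then have "z powr \<gamma> \<le> 1" using z g by (intro powr_le1) auto
        then show ?thesis using z by simp
      next
        case False then have "z powr \<gamma> \<le> z powr 1" using g by (intro powr_mono) auto
        then show ?thesis using False by simp
      qed
      then show "norm (Zr K \<beta> h \<omega> m powr \<gamma>) \<le> norm (1 + Zr K \<beta> h \<omega> m)" using z unfolding z_def by simp
    qed
  qed
  show ?case
  proof (cases n)
    case 0 then show ?thesis by (simp add: P.prob_space)
  next
    case (Suc k)
    define G where "G m y = K (Suc k - m) powr \<gamma> * exp ((\<gamma> * \<beta>) * y - \<gamma> * h)" for m y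
    have pt: "Zr K \<beta> h \<omega> n powr \<gamma> \<le> (\<Sum>m<Suc k. Zr K \<beta> h \<omega> m powr \<gamma> * G m (\<omega> m))" for \<omega>
    proof -
      have "Zr K \<beta> h \<omega> n powr \<gamma> \<le> (\<Sum>m<Suc k. (Zr K \<beta> h \<omega> m * K (Suc k - m) * exp (\<beta> * \<omega> m - h)) powr \<gamma>)"
        unfolding Suc Zr.simps using g nn K0 by (intro powr_sum_le) auto
      also have "\<dots> = (\<Sum>m<Suc k. Zr K \<beta> h \<omega> m powr \<gamma> * G m (\<omega> m))"
      proof (intro sum.cong refl)
        fix m
        have "(Zr K \<beta> h \<omega> m * K (Suc k - m) * exp (\<beta> * \<omega> m - h)) powr \<gamma>
           = Zr K \<beta> h \<omega> m powr \<gamma> * K (Suc k - m) powr \<gamma> * exp (\<beta> * \<omega> m - h) powr \<gamma>"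
          using nn K0 by (simp add: powr_mult)
        also have "exp (\<beta> * \<omega> m - h) powr \<gamma> = exp ((\<gamma> * \<beta>) * \<omega> m - \<gamma> * h)"
          by (simp add: powr_def algebra_simps)
        finally show "(Zr K \<beta> h \<omega> m * K (Suc k - m) * exp (\<beta> * \<omega> m - h)) powr \<gamma> = Zr K \<beta> h \<omega> m powr \<gamma> * G m (\<omega> m)"
          unfolding G_def by (simp add: mult_ac)
      qed
      finally show ?thesis .
    qed
    have trm: "integrable P (\<lambda>\<omega>. Zr K \<beta> h \<omega> m powr \<gamma> * G m (\<omega> m)) \<and>
       (\<integral>\<omega>. Zr K \<beta> h \<omega> m powr \<gamma> * G m (\<omega> m) \<partial>P) \<le> K (Suc k - m) powr \<gamma> * exp (- (\<gamma> * h)) * mgf (\<gamma> * \<beta>)"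
      if m: "m < Suc k" for m
    proof -
      have gi: "integrable M (G m)" unfolding G_def by (rule g_int)
      then have gm: "G m \<in> borel_measurable M" by auto
      have pm: "(\<lambda>x::real. x powr \<gamma>) \<in> borel_measurable borel" by measurable
      have ind: "P.indep_var borel (\<lambda>\<omega>. Zr K \<beta> h \<omega> m powr \<gamma>) borel (\<lambda>\<omega>. G m (\<omega> m))"
        using indep_Zr[OF pm gm, of K \<beta> h m] by simp
      have i2: "integrable P (\<lambda>\<omega>. G m (\<omega> m))" by (rule integrable_coord[OF gi])
      have "(\<integral>\<omega>. G m (\<omega> m) \<partial>P) = (\<integral>y. G m y \<partial>M)" by (rule integral_coord[OF gm])
      also have "\<dots> = K (Suc k - m) powr \<gamma> * exp (- (\<gamma> * h)) * mgf (\<gamma> * \<beta>)" unfolding G_def by (rule g_integral)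
      finally have eG: "(\<integral>\<omega>. G m (\<omega> m) \<partial>P) = K (Suc k - m) powr \<gamma> * exp (- (\<gamma> * h)) * mgf (\<gamma> * \<beta>)" .
      have e1: "(\<integral>\<omega>. Zr K \<beta> h \<omega> m powr \<gamma> \<partial>P) \<le> 1" using less m Suc by simp
      have "mgf (\<gamma> * \<beta>) \<ge> 0" unfolding mgf_def by simp
      then have c0: "K (Suc k - m) powr \<gamma> * exp (- (\<gamma> * h)) * mgf (\<gamma> * \<beta>) \<ge> 0" by simp
      have "(\<integral>\<omega>. Zr K \<beta> h \<omega> m powr \<gamma> \<partial>P) * (K (Suc k - m) powr \<gamma> * exp (- (\<gamma> * h)) * mgf (\<gamma> * \<beta>))
          \<le> 1 * (K (Suc k - m) powr \<gamma> * exp (- (\<gamma> * h)) * mgf (\<gamma> * \<beta>))" by (rule mult_right_mono[OF e1 c0])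
      then show ?thesis using P.indep_var_lebesgue_integral[OF ind intg i2] P.indep_var_integrable[OF ind intg i2]
        eG by simp
    qed
    have "(\<integral>\<omega>. Zr K \<beta> h \<omega> n powr \<gamma> \<partial>P) \<le> (\<integral>\<omega>. (\<Sum>m<Suc k. Zr K \<beta> h \<omega> m powr \<gamma> * G m (\<omega> m)) \<partial>P)"
      using trm pt intg by (intro integral_mono Bochner_Integration.integrable_sum) auto
    also have "\<dots> = (\<Sum>m<Suc k. (\<integral>\<omega>. Zr K \<beta> h \<omega> m powr \<gamma> * G m (\<omega> m) \<partial>P))"
      using trm by (intro Bochner_Integration.integral_sum) auto
    also have "\<dots> \<le> (\<Sum>m<Suc k. K (Suc k - m) powr \<gamma> * exp (- (\<gamma> * h)) * mgf (\<gamma> * \<beta>))"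
      using trm by (intro sum_mono) auto
    also have "\<dots> \<le> 1" by (rule hsum)
    finally show ?thesis using intg by simp
  qed
qed

lemma eventually_small:
  assumes K0: "\<And>n. K n \<ge> 0" and g: "0 < \<gamma>" "\<gamma> < 1"
    and hsum: "\<And>N. (\<Sum>m<N. K (N - m) powr \<gamma> * exp (- (\<gamma> * h)) * mgf (\<gamma> * \<beta>)) \<le> 1"
    and d: "\<delta> > 0"
  shows "AE \<omega> in P. eventually (\<lambda>n. Zr K \<beta> h \<omega> n < exp (\<delta> * real n)) sequentially"
proof -
  interpret P: prob_space P by (rule prob_P)
  have [measurable]: "(\<lambda>\<omega>. Zr K \<beta> h \<omega> n) \<in> borel_measurable P" for n by (rule Zr_meas_P)
  define A where "A n = {\<omega> \<in> space P. exp (\<gamma> * \<delta> * real n) \<le> Zr K \<beta> h \<omega> n powr \<gamma>}" for n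
  have As: "A n \<in> sets P" for n unfolding A_def by measurable
  have mA: "measure P (A n) \<le> exp (- (\<gamma> * \<delta>)) ^ n" for n
  proof -
    have "measure P (A n) \<le> (\<integral>\<omega>. Zr K \<beta> h \<omega> n powr \<gamma> \<partial>P) / exp (\<gamma> * \<delta> * real n)"
      unfolding A_def using frac_moment[OF K0 g hsum, of n]
      by (intro integral_Markov_inequality_measure[where A="space P"]) auto
    also have "\<dots> \<le> 1 / exp (\<gamma> * \<delta> * real n)"
      using frac_moment[OF K0 g hsum, of n] by (intro divide_right_mono) auto
    also have "\<dots> = exp (- (\<gamma> * \<delta>)) ^ n"
      by (simp add: exp_minus exp_of_nat_mult[symmetric] field_simps power_inverse[symmetric] mult_ac)
    finally show ?thesis .
  qed
  have q: "exp (- (\<gamma> * \<delta>)) < 1" using g d by simp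
  have summ: "summable (\<lambda>n. measure P (A n))"
  proof (rule summable_comparison_test')
    show "summable (\<lambda>n. exp (- (\<gamma> * \<delta>)) ^ n)" using q by (intro summable_geometric) simp
    show "norm (measure P (A n)) \<le> exp (- (\<gamma> * \<delta>)) ^ n" if "n \<ge> 0" for n using mA[of n] by simp
  qed
  have "AE \<omega> in P. eventually (\<lambda>n. \<omega> \<in> space P - A n) sequentially"
    by (rule borel_cantelli_AE1[OF As _ summ]) (simp add: less_top[symmetric])
  then show ?thesis
  proof (rule AE_mp[OF _ AE_I2], intro impI)
    fix \<omega> assume \<omega>: "\<omega> \<in> space P" and ev: "eventually (\<lambda>n. \<omega> \<in> space P - A n) sequentially"
    show "eventually (\<lambda>n. Zr K \<beta> h \<omega> n < exp (\<delta> * real n)) sequentially"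
      using ev
    proof eventually_elim
      case (elim n)
      then have lt: "Zr K \<beta> h \<omega> n powr \<gamma> < exp (\<gamma> * \<delta> * real n)" using \<omega> unfolding A_def by auto
      show ?case
      proof (rule ccontr)
        assume "\<not> Zr K \<beta> h \<omega> n < exp (\<delta> * real n)"
        then have "exp (\<delta> * real n) powr \<gamma> \<le> Zr K \<beta> h \<omega> n powr \<gamma>" using g by (intro powr_mono2) auto
        moreover have "exp (\<delta> * real n) powr \<gamma> = exp (\<gamma> * \<delta> * real n)" by (simp add: powr_def mult_ac)
        ultimately show False using lt by simp
      qed
    qed
  qed
qed

lemma quenched_lim:
  assumes K0: "\<And>n. K n \<ge> 0" and g: "0 < \<gamma>" "\<gamma> < 1"
    and hsum: "\<And>N. (\<Sum>m<N. K (N - m) powr \<gamma> * exp (- (\<gamma> * h)) * mgf (\<gamma> * \<beta>)) \<le> 1"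
    and K_tail: "(\<lambda>n. ln (K n) / ln (real n)) \<longlonglongrightarrow> - (1 + \<alpha>)" and a: "\<alpha> > 0"
  shows "AE \<omega> in P. (\<lambda>n. ln (Zpin K \<beta> h \<omega> n) / real n) \<longlonglongrightarrow> 0"
proof -
  have "AE \<omega> in P. \<forall>k::nat. eventually (\<lambda>n. Zr K \<beta> h \<omega> n < exp (1 / real (Suc k) * real n)) sequentially"
    unfolding AE_all_countable
  proof (intro allI)
    fix k :: nat
    show "AE \<omega> in P. eventually (\<lambda>n. Zr K \<beta> h \<omega> n < exp (1 / real (Suc k) * real n)) sequentially"
      by (rule eventually_small[OF K0 g hsum]) simp
  qed
  then show ?thesis
  proof (rule AE_mp[OF _ AE_I2], intro impI)
    fix \<omega> assume ev: "\<forall>k::nat. eventually (\<lambda>n. Zr K \<beta> h \<omega> n < exp (1 / real (Suc k) * real n)) sequentially"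
    obtain N0 where N0: "\<And>n. n \<ge> N0 \<Longrightarrow> K n \<noteq> 0"
      using lnK_over_n(2)[OF K_tail a] unfolding eventually_sequentially by auto
    define c where "c = \<beta> * \<omega> 0 - h"
    have pos: "Zr K \<beta> h \<omega> n > 0" "Zpin K \<beta> h \<omega> n = Zr K \<beta> h \<omega> n"
      "ln (K n) + c \<le> ln (Zr K \<beta> h \<omega> n)" if n: "n \<ge> max N0 1" for n
    proof -
      have Kp: "K n > 0" using N0[of n] K0[of n] n by simp
      have ge: "K n * exp c \<le> Zr K \<beta> h \<omega> n" using Zr_ge[where K=K and n=n and \<beta>=\<beta> and h=h and \<omega>=\<omega>, OF K0] n unfolding c_def by simp
      moreover have "K n * exp c > 0" using Kp by simp
      ultimately show "Zr K \<beta> h \<omega> n > 0" by simp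
      show "Zpin K \<beta> h \<omega> n = Zr K \<beta> h \<omega> n" using n by (intro Zpin_Zr) simp
      have "ln (K n * exp c) \<le> ln (Zr K \<beta> h \<omega> n)" using ge Kp by (intro ln_mono) auto
      then show "ln (K n) + c \<le> ln (Zr K \<beta> h \<omega> n)" using Kp by (simp add: ln_mult)
    qed
    have low: "(\<lambda>n. ln (K n) / real n + c / real n) \<longlonglongrightarrow> 0"
      using tendsto_add[OF lnK_over_n(1)[OF K_tail a] tendsto_divide_0[OF tendsto_const filterlim_at_top_imp_at_infinity[OF filterlim_real_sequentially]]]
      by simp
    show "(\<lambda>n. ln (Zpin K \<beta> h \<omega> n) / real n) \<longlonglongrightarrow> 0"
    proof (rule order_tendstoI)
      fix e :: real assume e: "e < 0"
      have "eventually (\<lambda>n. e < ln (K n) / real n + c / real n) sequentially" using order_tendstoD(1)[OF low e] .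
      moreover have "eventually (\<lambda>n. n \<ge> max N0 1) sequentially" by (rule eventually_ge_at_top)
      ultimately show "eventually (\<lambda>n. e < ln (Zpin K \<beta> h \<omega> n) / real n) sequentially"
      proof eventually_elim
        case (elim n)
        have "ln (K n) / real n + c / real n = (ln (K n) + c) / real n" by (simp add: add_divide_distrib)
        also have "\<dots> \<le> ln (Zr K \<beta> h \<omega> n) / real n" using pos(3)[OF elim(2)] by (intro divide_right_mono) auto
        finally show ?case using elim pos(2)[OF elim(2)] by simp
      qed
    next
      fix e :: real assume e: "e > 0"
      obtain k :: nat where k: "1 / real (Suc k) < e" using nat_approx_posE[OF e] by blast
      have "eventually (\<lambda>n. Zr K \<beta> h \<omega> n < exp (1 / real (Suc k) * real n)) sequentially" using ev by simp
      moreover have "eventually (\<lambda>n. n \<ge> max N0 1) sequentially" by (rule eventually_ge_at_top)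
      ultimately show "eventually (\<lambda>n. ln (Zpin K \<beta> h \<omega> n) / real n < e) sequentially"
      proof eventually_elim
        case (elim n)
        have zp: "Zr K \<beta> h \<omega> n > 0" by (rule pos(1)[OF elim(2)])
        have "ln (Zr K \<beta> h \<omega> n) < ln (exp (1 / real (Suc k) * real n))" using elim(1) zp by (intro ln_less_cancel_iff[THEN iffD2]) auto
        then have "ln (Zr K \<beta> h \<omega> n) < 1 / real (Suc k) * real n" by simp
        moreover have "real n > 0" using elim(2) by simp
        ultimately have "ln (Zr K \<beta> h \<omega> n) / real n < 1 / real (Suc k)" by (simp add: field_simps)
        then show ?case using k pos(2)[OF elim(2)] by simp
      qed
    qed
  qed
qed

end


declare sum.lessThan_Suc [simp del]

lemma Inf_junk: "\<not> bdd_below (X::real set) \<Longrightarrow> Inf X = - (LEAST z::real. False)"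
proof -
  assume nb: "\<not> bdd_below X"
  have "(\<lambda>z. \<forall>x\<in>uminus ` X. x \<le> z) = (\<lambda>z. False)"
  proof (rule ext)
    fix z :: real
    show "(\<forall>x\<in>uminus ` X. x \<le> z) = False"
    proof (rule ccontr)
      assume "(\<forall>x\<in>uminus ` X. x \<le> z) \<noteq> False"
      then have "\<forall>x\<in>X. - z \<le> x" by force
      then have "bdd_below X" by (intro bdd_belowI[of _ "- z"]) auto
      then show False using nb by simp
    qed
  qed
  then show ?thesis unfolding Inf_real_def Sup_real_def by simp
qed

lemma summable_Kpow:
  fixes K :: "nat \<Rightarrow> real"
  assumes K0: "\<And>n. K n \<ge> 0" and K_tail: "(\<lambda>n. ln (K n) / ln (real n)) \<longlonglongrightarrow> - (1 + \<alpha>)"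
    and g: "0 < \<gamma>" "\<gamma> * (1 + \<alpha>) > 1"
  shows "summable (\<lambda>n. K n powr \<gamma>)"
proof -
  define e1 where "e1 = - (1 + \<alpha>) + (\<gamma> * (1 + \<alpha>) - 1) / (2 * \<gamma>)"
  have "- (1 + \<alpha>) < e1" unfolding e1_def using g by simp
  then have ev: "eventually (\<lambda>n. ln (K n) / ln (real n) < e1) sequentially"
    using order_tendstoD(2)[OF K_tail] by blast
  have e1g: "e1 * \<gamma> < -1"
  proof -
    have "e1 * \<gamma> = - (\<gamma> * (1 + \<alpha>)) + (\<gamma> * (1 + \<alpha>) - 1) / 2" unfolding e1_def using g by (simp add: field_simps)
    moreover obtain s where s: "s = \<gamma> * (1 + \<alpha>)" by simp
    ultimately have h1: "e1 * \<gamma> = - s + (s - 1) / 2" and h2: "s > 1" using g by simp_all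
    have "- s + (s - 1) / 2 < - 1" using h2 by (simp add: field_simps)
    then show ?thesis using h1 by simp
  qed
  show ?thesis
  proof (rule summable_comparison_test_ev)
    show "summable (\<lambda>n. real n powr (e1 * \<gamma>))" using e1g by (simp add: summable_real_powr_iff)
    show "eventually (\<lambda>n. norm (K n powr \<gamma>) \<le> real n powr (e1 * \<gamma>)) sequentially"
      using ev eventually_ge_at_top[of "2::nat"]
    proof eventually_elim
      case (elim n)
      have ln: "ln (real n) > 0" using elim by simp
      show ?case
      proof (cases "K n = 0")
        case True then show ?thesis using g by simp
      next
        case False
        then have Kp: "K n > 0" using K0[of n] by simp
        have "ln (K n) < e1 * ln (real n)" using elim(1) ln by (simp add: divide_less_eq)
        then have "K n < exp (e1 * ln (real n))" using Kp by (metis exp_less_cancel_iff exp_ln)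
        also have "\<dots> = real n powr e1" using elim by (simp add: powr_def)
        finally have "K n powr \<gamma> \<le> (real n powr e1) powr \<gamma>" using Kp g by (intro powr_mono2) auto
        also have "\<dots> = real n powr (e1 * \<gamma>)" by (simp add: powr_powr)
        finally show ?thesis using Kp by simp
      qed
    qed
  qed
qed

lemma partial_le_suminf:
  fixes f :: "nat \<Rightarrow> real"
  assumes f0: "\<And>n. f n \<ge> 0" and sf: "summable f"
  shows "(\<Sum>m<N. f (N - m)) \<le> suminf f"
proof -
  have "(\<Sum>m<N. f (N - m)) = (\<Sum>i<N. f (Suc i))"
    using sum.nat_diff_reindex[of "\<lambda>i. f (Suc i)" N] by (simp add: Suc_diff_Suc)
  also have "\<dots> \<le> (\<Sum>i<Suc N. f i)" unfolding sum.lessThan_Suc_shift using f0[of 0] by simp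
  also have "\<dots> \<le> suminf f" using sf f0 by (intro sum_le_suminf) auto
  finally show ?thesis .
qed

context mu
begin

lemma f_que_zero:
  assumes "AE \<omega> in P. (\<lambda>n. ln (Zpin K \<beta> h \<omega> n) / real n) \<longlonglongrightarrow> 0"
  shows "f_que K M \<beta> h = 0"
proof -
  interpret P: prob_space P by (rule prob_P)
  show ?thesis unfolding f_que_def
  proof (rule the_equality)
    show "AE \<omega> in P. (\<lambda>n. ln (Zpin K \<beta> h \<omega> n) / real n) \<longlonglongrightarrow> 0" by (rule assms)
  next
    fix F0 assume "AE \<omega> in P. (\<lambda>n. ln (Zpin K \<beta> h \<omega> n) / real n) \<longlonglongrightarrow> F0"
    with assms have "AE \<omega> in P. F0 = 0" by eventually_elim (rule LIMSEQ_unique)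
    then show "F0 = 0" by simp
  qed
qed

lemma f_ann_eq: "f_ann K M \<beta> h = lim (\<lambda>n. ln (Uh K (mgf \<beta> * exp (- h)) n) / real n)"
proof -
  have "(\<lambda>n. ln (\<integral>\<omega>. Zpin K \<beta> h \<omega> n \<partial>P) / real n) = (\<lambda>n. ln (Uh K (mgf \<beta> * exp (- h)) n) / real n)"
  proof (rule ext)
    fix n
    show "ln (\<integral>\<omega>. Zpin K \<beta> h \<omega> n \<partial>P) / real n = ln (Uh K (mgf \<beta> * exp (- h)) n) / real n"
    proof (cases "n = 0")
      case False
      then have "(\<integral>\<omega>. Zpin K \<beta> h \<omega> n \<partial>P) = (\<integral>\<omega>. Zr K \<beta> h \<omega> n \<partial>P)"
        by (intro Bochner_Integration.integral_cong refl Zpin_Zr) simp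
      also have "\<dots> = Uh K (mgf \<beta> * exp (- h)) n" using Zr_expect by simp
      finally show ?thesis by simp
    qed simp
  qed
  then show ?thesis unfolding f_ann_def by simp
qed

theorem main_bdd:
  fixes K :: "nat \<Rightarrow> real" and \<alpha> :: real
  assumes K0: "\<And>n. K n \<ge> 0"
    and KS: "K sums 1"
    and K_tail: "(\<lambda>n. ln (K n) / ln (real n)) \<longlonglongrightarrow> - (1 + \<alpha>)"
    and a: "\<alpha> > 0"
    and mean: "(\<integral>x. x \<partial>M) = 0"
    and var: "(\<integral>x. x\<^sup>2 \<partial>M) = 1"
    and noatom: "bdd_above (msupport M) \<Longrightarrow> measure M {Sup (msupport M)} = 0"
  shows "bdd_above (disorder_irrelevant_set K M)"
proof -
  define r where "r = 1 / (1 + \<alpha>)"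
  define \<gamma> where "\<gamma> = (1 + r) / 2"
  have ia: "0 < r" "r < 1" "r * (1 + \<alpha>) = 1" unfolding r_def using a by (auto simp: field_simps)
  have g1: "0 < \<gamma>" unfolding \<gamma>_def using ia(1) by simp
  have g2: "\<gamma> < 1" unfolding \<gamma>_def using ia(2) by simp
  have "\<gamma> * (1 + \<alpha>) = ((1 + \<alpha>) + r * (1 + \<alpha>)) / 2" unfolding \<gamma>_def by (simp add: algebra_simps)
  then have g3: "\<gamma> * (1 + \<alpha>) > 1" using a ia(3) by simp
  note g = g1 g2 g3
  have sK: "summable (\<lambda>n. K n powr \<gamma>)" by (rule summable_Kpow[OF K0 K_tail g(1) g(3)])
  define S where "S = suminf (\<lambda>n. K n powr \<gamma>)"
  obtain N0 where N0: "\<And>n. n \<ge> N0 \<Longrightarrow> K n \<noteq> 0"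
    using lnK_over_n(2)[OF K_tail a] unfolding eventually_sequentially by auto
  define n0 where "n0 = max N0 1"
  have n0: "n0 \<ge> 1" "K n0 > 0" unfolding n0_def using N0[of "max N0 1"] K0[of "max N0 1"] by auto
  have S_ge: "S \<ge> K n0 powr \<gamma>" unfolding S_def
    using sum_le_suminf[OF sK, of "{n0}"] by simp
  then have S: "S > 0" using n0 by (smt (verit) powr_gt_zero)
  have Kn01: "K n0 \<le> 1"
  proof -
    have "K n0 \<le> suminf K" using sum_le_suminf[of K "{n0}"] KS K0 by (simp add: sums_summable)
    then show ?thesis using KS by (simp add: sums_unique[symmetric])
  qed
  define c where "c = (K n0 / (2 * exp 1)) powr \<gamma> / S"
  have c: "c > 0" unfolding c_def using n0 S by simp
  obtain B1 where B1: "\<And>\<beta>. \<beta> \<ge> B1 \<Longrightarrow> mgf (\<gamma> * \<beta>) \<le> c * mgf \<beta> powr \<gamma>"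
    using ratio_small[OF noatom mean g(1) g(2) c] by auto
  define J where "J = - (LEAST z::real. False)"
  obtain B2 where B2: "\<And>t. t \<ge> B2 \<Longrightarrow> mgf t \<ge> exp (\<gamma> * J) / S + 1"
    using mgf_unbounded[OF mean var] by blast
  define \<beta>0 where "\<beta>0 = max B1 (B2 / \<gamma>)"
  have "\<beta> \<le> \<beta>0" if \<beta>in: "\<beta> \<in> disorder_irrelevant_set K M" for \<beta>
  proof (rule ccontr)
    assume "\<not> \<beta> \<le> \<beta>0"
    then have b: "\<beta> > \<beta>0" by simp
    have eq: "hc_que K M \<beta> = hc_ann K M \<beta>" using \<beta>in unfolding disorder_irrelevant_set_def by simp
    have mg1: "mgf t \<ge> 1" for t by (rule mgf_ge1[OF mean])
    define Q where "Q = S * mgf (\<gamma> * \<beta>)"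
    have Q: "Q > 0" unfolding Q_def using S mg1[of "\<gamma> * \<beta>"] by simp
    define h0 where "h0 = ln Q / \<gamma>"
    have hsum: "(\<Sum>m<N. K (N - m) powr \<gamma> * exp (- (\<gamma> * h0)) * mgf (\<gamma> * \<beta>)) \<le> 1" for N
    proof -
      have e: "exp (- (\<gamma> * h0)) = 1 / Q" unfolding h0_def using g Q by (simp add: exp_minus exp_ln inverse_eq_divide)
      have "(\<Sum>m<N. K (N - m) powr \<gamma> * exp (- (\<gamma> * h0)) * mgf (\<gamma> * \<beta>)) = (\<Sum>m<N. K (N - m) powr \<gamma>) / S"
        unfolding e Q_def using mg1[of "\<gamma> * \<beta>"] by (simp add: sum_divide_distrib)
      also have "\<dots> \<le> S / S" using partial_le_suminf[OF _ sK, of N] S unfolding S_def by (intro divide_right_mono) auto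
      finally show ?thesis using S by simp
    qed
    have fq: "f_que K M \<beta> h0 = 0"
      by (rule f_que_zero[OF quenched_lim[OF K0 g(1) g(2) hsum K_tail a]])
    have Mb: "mgf \<beta> > 0" using mg1[of \<beta>] by simp
    have eh0: "exp h0 = Q powr (1 / \<gamma>)" unfolding h0_def using Q by (simp add: powr_def)
    have Qle: "Q \<le> (K n0 / (2 * exp 1) * mgf \<beta>) powr \<gamma>"
    proof -
      have "Q \<le> S * (c * mgf \<beta> powr \<gamma>)" unfolding Q_def using B1[of \<beta>] b S unfolding \<beta>0_def
        by (intro mult_left_mono) auto
      also have "\<dots> = (K n0 / (2 * exp 1)) powr \<gamma> * mgf \<beta> powr \<gamma>" unfolding c_def using S by simp
      also have "\<dots> = (K n0 / (2 * exp 1) * mgf \<beta>) powr \<gamma>" using n0 Mb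
        by (subst powr_mult) auto
      finally show ?thesis .
    qed
    have "exp h0 \<le> K n0 / (2 * exp 1) * mgf \<beta>"
    proof -
      have "Q powr (1 / \<gamma>) \<le> ((K n0 / (2 * exp 1) * mgf \<beta>) powr \<gamma>) powr (1 / \<gamma>)"
        using Qle Q g by (intro powr_mono2) auto
      also have "\<dots> = K n0 / (2 * exp 1) * mgf \<beta>" using g n0 Mb by (simp add: powr_powr)
      finally show ?thesis using eh0 by simp
    qed
    then have eh01: "exp (h0 + 1) \<le> K n0 * mgf \<beta> / 2" by (simp add: exp_add field_simps)
    have fa_pos: "f_ann K M \<beta> h \<noteq> 0" if h: "h \<le> h0 + 1" for h
    proof -
      define x where "x = mgf \<beta> * exp (- h)"
      have "exp h \<le> exp (h0 + 1)" using h by simp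
      then have eh: "exp h \<le> K n0 * mgf \<beta> / 2" using eh01 by (rule order_trans)
      have xK: "x * K n0 \<ge> 2"
      proof -
        have "2 * exp h \<le> K n0 * mgf \<beta>" using eh by simp
        then show ?thesis unfolding x_def by (simp add: exp_minus field_simps)
      qed
      have x1: "x \<ge> 1"
      proof -
        have "x * K n0 \<le> x * 1" using Kn01 Mb unfolding x_def by (intro mult_left_mono) auto
        then show ?thesis using xK by simp
      qed
      obtain L where L: "L > 0" "(\<lambda>n. ln (Uh K x n) / real n) \<longlonglongrightarrow> L"
        using ann_pos[OF K0 KS K_tail a x1 n0(1)] xK by auto
      have "f_ann K M \<beta> h = L" unfolding f_ann_eq x_def[symmetric] using L(2) by (rule limI)
      then show ?thesis using L by simp
    qed
    define h1 where "h1 = ln (mgf \<beta>) + 1"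
    have "f_ann K M \<beta> h1 = 0"
    proof -
      have x: "mgf \<beta> * exp (- h1) = exp (- 1)" unfolding h1_def using Mb by (simp add: exp_diff exp_minus field_simps)
      have "(\<lambda>n. ln (Uh K (exp (- 1)) n) / real n) \<longlonglongrightarrow> 0"
        by (rule ann_zero[OF K0 KS K_tail a]) auto
      then show ?thesis unfolding f_ann_eq x by (rule limI)
    qed
    then have ne: "{h. f_ann K M \<beta> h = 0} \<noteq> {}" by auto
    have lowb: "h0 + 1 \<le> hc_ann K M \<beta>" unfolding hc_ann_def
    proof (rule cInf_greatest[OF ne])
      fix h assume "h \<in> {h. f_ann K M \<beta> h = 0}"
      then show "h0 + 1 \<le> h" using fa_pos by (meson mem_Collect_eq not_le less_imp_le)
    qed
    \<comment> \<open>(d) h0 exceeds the junk value\<close>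
    have "mgf (\<gamma> * \<beta>) \<ge> exp (\<gamma> * J) / S + 1"
    proof (rule B2)
      have "B2 / \<gamma> \<le> \<beta>" using b unfolding \<beta>0_def by simp
      then show "B2 \<le> \<gamma> * \<beta>" using g by (simp add: divide_le_eq mult.commute)
    qed
    then have "Q \<ge> exp (\<gamma> * J) + S" unfolding Q_def using S by (simp add: field_simps)
    then have "Q > exp (\<gamma> * J)" using S by simp
    then have "ln Q > \<gamma> * J" using Q by (metis exp_less_cancel_iff exp_ln)
    then have hJ: "h0 > J" unfolding h0_def using g by (simp add: field_simps)
    show False
    proof (cases "bdd_below {h. f_que K M \<beta> h = 0}")
      case True
      have "hc_que K M \<beta> \<le> h0" unfolding hc_que_def using True fq by (intro cInf_lower) auto
      then show False using eq lowb by simp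
    next
      case False
      then have "hc_que K M \<beta> = J" unfolding hc_que_def J_def by (rule Inf_junk)
      then show False using eq lowb hJ by simp
    qed
  qed
  then show ?thesis unfolding bdd_above_def by blast
qed

end

theorem corollary1p7:
  fixes K :: "nat \<Rightarrow> real" and \<alpha> :: real and \<mu>0 :: "real measure"
  assumes K_nonneg: "\<And>n. K n \<ge> 0"
    and K_zero: "K 0 = 0"
    and K_sum: "(\<lambda>n. K n) sums 1"
    and K_tail: "(\<lambda>n. ln (K n) / ln (real n)) \<longlonglongrightarrow> - (1 + \<alpha>)"
    and alpha_pos: "\<alpha> > 0"
    and mu_prob: "prob_space \<mu>0"
    and mu_sets: "sets \<mu>0 = sets borel"
    and mu_exp: "\<And>t. integrable \<mu>0 (\<lambda>x. exp (t * x))"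
    and mu_mean: "(\<integral>x. x \<partial>\<mu>0) = 0"
    and mu_var: "(\<integral>x. x\<^sup>2 \<partial>\<mu>0) = 1"
    and no_atom_top: "bdd_above (msupport \<mu>0) \<Longrightarrow> measure \<mu>0 {Sup (msupport \<mu>0)} = 0"
  shows "bdd_above (disorder_irrelevant_set K \<mu>0)"
proof -
  interpret mu \<mu>0 by (intro mu.intro mu_axioms.intro mu_prob mu_sets mu_exp)
  have KS: "K sums 1" using K_sum by simp
  show ?thesis by (rule main_bdd[OF K_nonneg KS K_tail alpha_pos mu_mean mu_var no_atom_top])
qed

end
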